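(* Given a c.e. transitive relation $\prec$ on $\omega$ and a c.e. set $U\subseteq\omega$, one can effectively obtain (uniformly in indices for $\prec$ and $U$) a c.e. transitive relation $\sqsubset$ on $\omega$ such that $\mathcal{I}(\sqsubset)$ is computably homeomorphic to the effective space obtained from $\mathcal{I}(\prec)$ by adding the set $A=\{I\in\mathcal{I}(\prec)\mid (\forall x\in U)\, x\notin I\}$ as a c.e. open set to its topology.
   Context: For a transitive relation $\prec$ on $\omega$, an ideal is a non-empty set $I\subseteq\omega$ which is a lower set ($b\prec a\in I\Rightarrow b\in I$) and directed (for $a,b\in I$ there is $c\in I$ with $a\prec c$, $b\prec c$). $\mathcal{I}(\prec)$ is the space of all ideals with topology generated by $[n]_\prec=\{I\mid n\in I\}$, an effective space with base numbering $n\mapsto[n]_\prec$. Adding $A$ as a c.e. open set means taking the topology generated by the sets $[n]_\prec$ together with $A$, with the effective base consisting of the sets $[n]_\prec$ and $A\cap[n]_\prec$. Effective spaces are countably based $T_0$ spaces with a numbered base whose pairwise intersections are uniformly c.e. unions of basic sets; a map is computable if preimages of basic open sets are uniformly c.e. unions of basic open sets, and a computable homeomorphism is a homeomorphism computable in both directions. *)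

theory Defs
  imports Main "HOL-Library.Nat_Bijection"
begin

datatype recf = Z | S | Proj nat | Cn recf "recf list" | Pr recf recf | Mn recf

inductive eval :: "recf \<Rightarrow> nat list \<Rightarrow> nat \<Rightarrow> bool" where
  eval_Z: "eval Z xs 0"
| eval_S: "eval S (x # xs) (Suc x)"
| eval_Proj: "i < length xs \<Longrightarrow> eval (Proj i) xs (xs ! i)"
| eval_Cn: "list_all2 (\<lambda>g y. eval g xs y) gs ys \<Longrightarrow> eval f ys z \<Longrightarrow> eval (Cn f gs) xs z"
| eval_Pr0: "eval f xs y \<Longrightarrow> eval (Pr f g) (0 # xs) y"
| eval_PrS: "eval (Pr f g) (n # xs) y \<Longrightarrow> eval g (n # y # xs) z \<Longrightarrow> eval (Pr f g) (Suc n # xs) z"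
| eval_Mn: "eval f (n # xs) 0 \<Longrightarrow> (\<forall>m<n. \<exists>y. eval f (m # xs) (Suc y)) \<Longrightarrow> eval (Mn f) xs n"
monos list_all2_mono

fun code :: "recf \<Rightarrow> nat" where
  "code Z = prod_encode (0, 0)"
| "code S = prod_encode (1, 0)"
| "code (Proj i) = prod_encode (2, i)"
| "code (Cn f gs) = prod_encode (3, prod_encode (code f, list_encode (map code gs)))"
| "code (Pr f g) = prod_encode (4, prod_encode (code f, code g))"
| "code (Mn f) = prod_encode (5, code f)"

text \<open>The e-th c.e. set (domain of the e-th partial recursive function; empty if e
  is not a code).\<close>
definition W :: "nat \<Rightarrow> nat set" where
  "W e = {x. \<exists>f. code f = e \<and> (\<exists>y. eval f [x] y)}"

definition ce :: "nat set \<Rightarrow> bool" where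
  "ce A \<longleftrightarrow> (\<exists>e. A = W e)"

definition total_computable :: "(nat \<Rightarrow> nat) \<Rightarrow> bool" where
  "total_computable h \<longleftrightarrow> (\<exists>f. \<forall>n. eval f [n] (h n))"

definition ce_rel :: "nat \<Rightarrow> nat \<Rightarrow> nat \<Rightarrow> bool" where
  "ce_rel e a b \<longleftrightarrow> prod_encode (a, b) \<in> W e"

definition trans_rel :: "(nat \<Rightarrow> nat \<Rightarrow> bool) \<Rightarrow> bool" where
  "trans_rel R \<longleftrightarrow> (\<forall>a b c. R a b \<longrightarrow> R b c \<longrightarrow> R a c)"

definition is_ideal :: "(nat \<Rightarrow> nat \<Rightarrow> bool) \<Rightarrow> nat set \<Rightarrow> bool" where
  "is_ideal R I \<longleftrightarrow> I \<noteq> {} \<and> (\<forall>a\<in>I. \<forall>b. R b a \<longrightarrow> b \<in> I)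
     \<and> (\<forall>a\<in>I. \<forall>b\<in>I. \<exists>c\<in>I. R a c \<and> R b c)"

definition Ideals :: "(nat \<Rightarrow> nat \<Rightarrow> bool) \<Rightarrow> nat set set" where
  "Ideals R = {I. is_ideal R I}"

definition ideal_base :: "(nat \<Rightarrow> nat \<Rightarrow> bool) \<Rightarrow> nat \<Rightarrow> nat set set" where
  "ideal_base R n = {I \<in> Ideals R. n \<in> I}"

definition avoid_set :: "(nat \<Rightarrow> nat \<Rightarrow> bool) \<Rightarrow> nat set \<Rightarrow> nat set set" where
  "avoid_set R U = {I \<in> Ideals R. \<forall>x\<in>U. x \<notin> I}"

text \<open>Base numbering of the space obtained from I(R) by adding A as a c.e. open set:
  basic sets [n]_R (even indices 2n) and A \<inter> [n]_R (odd indices 2n+1).\<close>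
definition added_base :: "(nat \<Rightarrow> nat \<Rightarrow> bool) \<Rightarrow> nat set set \<Rightarrow> nat \<Rightarrow> nat set set" where
  "added_base R A n = (if even n then ideal_base R (n div 2) else A \<inter> ideal_base R (n div 2))"

definition computable_map ::
  "'a set \<Rightarrow> (nat \<Rightarrow> 'a set) \<Rightarrow> 'b set \<Rightarrow> (nat \<Rightarrow> 'b set) \<Rightarrow> ('a \<Rightarrow> 'b) \<Rightarrow> bool" where
  "computable_map X BX Y BY f \<longleftrightarrow> f ` X \<subseteq> Y \<and>
     (\<exists>V. ce V \<and> (\<forall>n. {x \<in> X. f x \<in> BY n} = \<Union>{BX m | m. prod_encode (n, m) \<in> V}))"

definition computably_homeomorphic ::
  "'a set \<Rightarrow> (nat \<Rightarrow> 'a set) \<Rightarrow> 'b set \<Rightarrow> (nat \<Rightarrow> 'b set) \<Rightarrow> bool" where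
  "computably_homeomorphic X BX Y BY \<longleftrightarrow> (\<exists>f g.
     computable_map X BX Y BY f \<and> computable_map Y BY X BX g \<and>
     (\<forall>x\<in>X. g (f x) = x) \<and> (\<forall>y\<in>Y. f (g y) = y))"

end

theory Submission
  imports Defs
begin

lemma eval_det: "eval f xs y \<Longrightarrow> eval f xs y' \<Longrightarrow> y = y'"
proof (induction arbitrary: y' rule: eval.induct)
  case (eval_Z xs) then show ?case by (cases rule: eval.cases) auto
next
  case (eval_S x xs) then show ?case by (cases rule: eval.cases) auto
next
  case (eval_Proj i xs) from eval_Proj.prems show ?case by (cases rule: eval.cases) auto
next
  case (eval_Cn xs gs ys f z)
  from eval_Cn.prems obtain ys' where a: "list_all2 (\<lambda>g y. eval g xs y) gs ys'" and b: "eval f ys' y'"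
    by (cases rule: eval.cases) auto
  have h: "list_all2 (\<lambda>g y. eval g xs y \<and> (\<forall>y'. eval g xs y' \<longrightarrow> y = y')) gs ys"
    using eval_Cn.IH by simp
  have "ys = ys'" using h a
  proof (induction gs arbitrary: ys ys')
    case Nil then show ?case by simp
  next
    case (Cons g gs)
    from Cons.prems(1) obtain y ys1 where 1: "ys = y # ys1" by (cases ys) auto
    from Cons.prems(2) obtain y' ys1' where 2: "ys' = y' # ys1'" by (cases ys') auto
    from Cons.prems 1 2 have "y = y'" "list_all2 (\<lambda>g y. eval g xs y \<and> (\<forall>y'. eval g xs y' \<longrightarrow> y = y')) gs ys1"
      "list_all2 (\<lambda>g y. eval g xs y) gs ys1'" by auto
    with Cons.IH 1 2 show ?case by auto
  qed
  with b eval_Cn.IH show ?case by simp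
next
  case (eval_Pr0 f xs y g) from eval_Pr0.prems show ?case by (cases rule: eval.cases) (use eval_Pr0.IH in auto)
next
  case (eval_PrS f g n xs y z) from eval_PrS.prems show ?case
    by (cases rule: eval.cases) (use eval_PrS.IH in auto)
next
  case (eval_Mn f n xs)
  from eval_Mn.prems obtain n' where n': "y' = n'" "eval f (n' # xs) 0" "\<forall>m<n'. \<exists>y. eval f (m # xs) (Suc y)"
    by (cases rule: eval.cases) auto
  show ?case
  proof (rule ccontr)
    assume "n \<noteq> y'"
    then consider "n < n'" | "n' < n" using n' by linarith
    then show False
    proof cases
      case 1 then obtain y where "eval f (n # xs) (Suc y)" using n' by blast
      with eval_Mn.IH(1) show False by fastforce
    next
      case 2 with eval_Mn.IH(2) n' show False by fastforce
    qed
  qed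
qed

definition cmp :: "nat \<Rightarrow> (nat list \<Rightarrow> nat) \<Rightarrow> bool" where
  "cmp k F \<longleftrightarrow> (\<exists>f. \<forall>xs. length xs = k \<longrightarrow> eval f xs (F xs))"

lemma comp_cong: "cmp k F \<Longrightarrow> (\<And>xs. length xs = k \<Longrightarrow> F xs = G xs) \<Longrightarrow> cmp k G"
  unfolding cmp_def by metis

lemma comp_zero: "cmp k (\<lambda>xs. 0)"
  unfolding cmp_def by (auto intro: eval_Z)

lemma comp_proj: "i < k \<Longrightarrow> cmp k (\<lambda>xs. xs ! i)"
  unfolding cmp_def by (auto intro: eval_Proj)

lemma comp_S0: "cmp (Suc k) (\<lambda>xs. Suc (xs ! 0))"
  unfolding cmp_def
proof (intro exI allI impI)
  fix xs :: "nat list" assume "length xs = Suc k"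
  then obtain x ys where "xs = x # ys" by (cases xs) auto
  then show "eval S xs (Suc (xs ! 0))" by (auto intro: eval_S)
qed

lemma comp_list:
  assumes "\<forall>F\<in>set Fs. cmp k F"
  shows "\<exists>fs. \<forall>xs. length xs = k \<longrightarrow> list_all2 (\<lambda>g y. eval g xs y) fs (map (\<lambda>F. F xs) Fs)"
  using assms
proof (induction Fs)
  case Nil then show ?case by (auto intro: exI[of _ "[]"])
next
  case (Cons F Fs)
  then obtain fs where fs: "\<forall>xs. length xs = k \<longrightarrow> list_all2 (\<lambda>g y. eval g xs y) fs (map (\<lambda>F. F xs) Fs)" by auto
  from Cons.prems obtain f where "\<forall>xs. length xs = k \<longrightarrow> eval f xs (F xs)" unfolding cmp_def by auto
  with fs show ?case by (auto intro!: exI[of _ "f # fs"])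
qed

lemma comp_cn:
  assumes "cmp m G" "length Fs = m" "\<forall>F\<in>set Fs. cmp k F"
  shows "cmp k (\<lambda>xs. G (map (\<lambda>F. F xs) Fs))"
proof -
  from assms(1) obtain g where g: "\<forall>ys. length ys = m \<longrightarrow> eval g ys (G ys)" unfolding cmp_def by auto
  from comp_list[OF assms(3)] obtain fs where fs: "\<forall>xs. length xs = k \<longrightarrow> list_all2 (\<lambda>g y. eval g xs y) fs (map (\<lambda>F. F xs) Fs)" by auto
  show ?thesis unfolding cmp_def
    by (rule exI[of _ "Cn g fs"]) (use g fs assms(2) in \<open>auto intro: eval_Cn\<close>)
qed

lemma comp1: "cmp (Suc 0) G \<Longrightarrow> cmp k F \<Longrightarrow> cmp k (\<lambda>xs. G [F xs])"
  using comp_cn[of "Suc 0" G "[F]" k] by simp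
lemma comp2: "cmp (Suc (Suc 0)) G \<Longrightarrow> cmp k F1 \<Longrightarrow> cmp k F2 \<Longrightarrow> cmp k (\<lambda>xs. G [F1 xs, F2 xs])"
  using comp_cn[of "Suc (Suc 0)" G "[F1, F2]" k] by simp
lemma comp3: "cmp (Suc (Suc (Suc 0))) G \<Longrightarrow> cmp k F1 \<Longrightarrow> cmp k F2 \<Longrightarrow> cmp k F3 \<Longrightarrow> cmp k (\<lambda>xs. G [F1 xs, F2 xs, F3 xs])"
  using comp_cn[of "Suc (Suc (Suc 0))" G "[F1, F2, F3]" k] by simp
lemma comp4: "cmp (Suc (Suc (Suc (Suc 0)))) G \<Longrightarrow> cmp k F1 \<Longrightarrow> cmp k F2 \<Longrightarrow> cmp k F3 \<Longrightarrow> cmp k F4 \<Longrightarrow>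
   cmp k (\<lambda>xs. G [F1 xs, F2 xs, F3 xs, F4 xs])"
  using comp_cn[of "Suc (Suc (Suc (Suc 0)))" G "[F1, F2, F3, F4]" k] by simp

primrec prec :: "(nat list \<Rightarrow> nat) \<Rightarrow> (nat list \<Rightarrow> nat) \<Rightarrow> nat \<Rightarrow> nat list \<Rightarrow> nat" where
  "prec F G 0 xs = F xs"
| "prec F G (Suc n) xs = G (n # prec F G n xs # xs)"

lemma comp_prec:
  assumes "cmp k F" "cmp (Suc (Suc k)) G"
  shows "cmp (Suc k) (\<lambda>xs. prec F G (xs ! 0) (tl xs))"
proof -
  from assms obtain f g where f: "\<forall>xs. length xs = k \<longrightarrow> eval f xs (F xs)"
    and g: "\<forall>xs. length xs = Suc (Suc k) \<longrightarrow> eval g xs (G xs)" unfolding cmp_def by auto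
  have *: "eval (Pr f g) (n # xs) (prec F G n xs)" if "length xs = k" for n xs
    using that
  proof (induction n)
    case 0 then show ?case using f by (auto intro: eval_Pr0)
  next
    case (Suc n)
    have "eval g (n # prec F G n xs # xs) (G (n # prec F G n xs # xs))" using g Suc.prems by simp
    with Suc show ?case by (auto intro: eval_PrS)
  qed
  show ?thesis unfolding cmp_def
  proof (intro exI allI impI)
    fix xs :: "nat list" assume "length xs = Suc k"
    then obtain n ys where "xs = n # ys" "length ys = k" by (cases xs) auto
    then show "eval (Pr f g) xs (prec F G (xs ! 0) (tl xs))" using * by simp
  qed
qed

lemma comp_mn:
  assumes "cmp (Suc k) F" "\<And>xs. length xs = k \<Longrightarrow> \<exists>n. F (n # xs) = 0"
  shows "cmp k (\<lambda>xs. LEAST n. F (n # xs) = 0)"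
proof -
  from assms obtain f where f: "\<forall>xs. length xs = Suc k \<longrightarrow> eval f xs (F xs)" unfolding cmp_def by auto
  show ?thesis unfolding cmp_def
  proof (intro exI allI impI)
    fix xs :: "nat list" assume l: "length xs = k"
    define n where "n = (LEAST n. F (n # xs) = 0)"
    have "F (n # xs) = 0" unfolding n_def by (rule LeastI_ex) (use assms(2)[OF l] in auto)
    moreover have "\<forall>m<n. \<exists>y. eval f (m # xs) (Suc y)"
    proof (intro allI impI)
      fix m assume "m < n"
      then have "F (m # xs) \<noteq> 0" unfolding n_def using not_less_Least by blast
      then obtain y where "F (m # xs) = Suc y" using not0_implies_Suc by blast
      then show "\<exists>y. eval f (m # xs) (Suc y)" using f l by (metis length_Cons)
    qed
    moreover have "eval f (n # xs) (F (n # xs))" using f l by simp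
    ultimately show "eval (Mn f) xs n" by (auto intro: eval_Mn)
  qed
qed


named_theorems ci

definition ind :: "bool \<Rightarrow> nat" where "ind P = (if P then 1 else 0)"

definition compP :: "nat \<Rightarrow> (nat list \<Rightarrow> bool) \<Rightarrow> bool" where
  "compP k P \<longleftrightarrow> cmp k (\<lambda>xs. ind (P xs))"

lemma comp_reindex:
  assumes "cmp m H" "\<forall>i<m. idx i < k"
  shows "cmp k (\<lambda>xs. H (map (\<lambda>i. xs ! idx i) [0..<m]))"
proof -
  have "cmp k (\<lambda>xs. H (map (\<lambda>F. F xs) (map (\<lambda>i xs. xs ! idx i) [0..<m])))"
    by (rule comp_cn[OF assms(1)]) (use assms(2) in \<open>auto intro: comp_proj\<close>)
  then show ?thesis by (simp add: cmp_def o_def)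
qed

lemma comp_subst0:
  assumes "cmp (Suc k) H" "cmp k N"
  shows "cmp k (\<lambda>xs. H (N xs # xs))"
proof -
  have "cmp k (\<lambda>xs. H (map (\<lambda>F. F xs) (N # map (\<lambda>i xs. xs ! i) [0..<k])))"
    by (rule comp_cn[OF assms(1)]) (use assms(2) in \<open>auto intro: comp_proj\<close>)
  then show ?thesis
  proof (rule comp_cong)
    fix xs :: "nat list" assume "length xs = k"
    then have "map (\<lambda>F. F xs) (N # map (\<lambda>i xs. xs ! i) [0..<k]) = N xs # xs"
      by (simp add: o_def) (metis map_nth)
    then show "H (map (\<lambda>F. F xs) (N # map (\<lambda>i xs. xs ! i) [0..<k])) = H (N xs # xs)" by simp
  qed
qed

lemma comp_const[ci]: "cmp k (\<lambda>xs. c)"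
proof (induction c)
  case 0 then show ?case by (rule comp_zero)
next
  case (Suc c)
  from comp1[OF comp_S0[of 0] Suc] show ?case by simp
qed

lemmas comp_proj' [ci] = comp_proj

lemma comp_Suc[ci]: "cmp k F \<Longrightarrow> cmp k (\<lambda>xs. Suc (F xs))"
  using comp1[OF comp_S0[of 0]] by simp

lemma compose1: "cmp (Suc 0) (\<lambda>ys. g (ys ! 0)) \<Longrightarrow> cmp k F \<Longrightarrow> cmp k (\<lambda>xs. g (F xs))"
  using comp1[of "\<lambda>ys. g (ys ! 0)"] by simp
lemma compose2: "cmp (Suc (Suc 0)) (\<lambda>ys. g (ys ! 0) (ys ! 1)) \<Longrightarrow> cmp k F \<Longrightarrow> cmp k G \<Longrightarrow> cmp k (\<lambda>xs. g (F xs) (G xs))"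
  using comp2[of "\<lambda>ys. g (ys ! 0) (ys ! 1)"] by simp
lemma compose3: "cmp (Suc (Suc (Suc 0))) (\<lambda>ys. g (ys ! 0) (ys ! 1) (ys ! 2)) \<Longrightarrow> cmp k F \<Longrightarrow> cmp k G \<Longrightarrow> cmp k H \<Longrightarrow>
  cmp k (\<lambda>xs. g (F xs) (G xs) (H xs))"
  using comp3[of "\<lambda>ys. g (ys ! 0) (ys ! 1) (ys ! 2)"] by simp

lemma comp_pred0: "cmp (Suc 0) (\<lambda>ys. ys ! 0 - 1)"
proof -
  have X: "cmp (Suc 0) (\<lambda>xs. prec (\<lambda>_. 0) (\<lambda>ys. ys ! 0) (xs ! 0) (tl xs))"
    using comp_prec[OF comp_zero comp_proj[of 0 "Suc (Suc 0)"]] by simp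
  have "prec (\<lambda>_. 0) (\<lambda>ys. ys ! 0) n xs = n - 1" for n xs by (cases n) auto
  then show ?thesis by (intro comp_cong[OF X]) simp
qed

lemma comp_add0: "cmp (Suc (Suc 0)) (\<lambda>ys. ys ! 0 + ys ! 1)"
proof -
  have X: "cmp (Suc (Suc 0)) (\<lambda>xs. prec (\<lambda>xs. xs ! 0) (\<lambda>ys. Suc (ys ! 1)) (xs ! 0) (tl xs))"
    using comp_prec[OF comp_proj[of 0 "Suc 0"] comp_Suc[OF comp_proj[of 1 "Suc (Suc (Suc 0))"]]] by simp
  have "prec (\<lambda>xs. xs ! 0) (\<lambda>ys. Suc (ys ! 1)) n xs = n + xs ! 0" for n xs by (induction n) auto
  then show ?thesis by (intro comp_cong[OF X]) (auto simp: length_Suc_conv)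
qed

lemma comp_add[ci]: "cmp k F \<Longrightarrow> cmp k G \<Longrightarrow> cmp k (\<lambda>xs. F xs + G xs)"
  by (rule compose2[OF comp_add0])

lemma comp_sub0: "cmp (Suc (Suc 0)) (\<lambda>ys. ys ! 1 - ys ! 0)"
proof -
  have X: "cmp (Suc (Suc 0)) (\<lambda>xs. prec (\<lambda>xs. xs ! 0) (\<lambda>ys. ys ! 1 - 1) (xs ! 0) (tl xs))"
    using comp_prec[OF comp_proj[of 0 "Suc 0"] compose1[OF comp_pred0 comp_proj[of 1 "Suc (Suc (Suc 0))"]]] by simp
  have "prec (\<lambda>xs. xs ! 0) (\<lambda>ys. ys ! 1 - 1) n xs = xs ! 0 - n" for n xs by (induction n) auto
  then show ?thesis by (intro comp_cong[OF X]) (auto simp: length_Suc_conv)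
qed

lemma comp_sub[ci]: "cmp k F \<Longrightarrow> cmp k G \<Longrightarrow> cmp k (\<lambda>xs. F xs - G xs)"
  using comp2[OF comp_sub0, of k G F] by simp

lemma comp_mult0: "cmp (Suc (Suc 0)) (\<lambda>ys. ys ! 0 * ys ! 1)"
proof -
  have X: "cmp (Suc (Suc 0)) (\<lambda>xs. prec (\<lambda>xs. 0) (\<lambda>ys. ys ! 1 + ys ! 2) (xs ! 0) (tl xs))"
    using comp_prec[OF comp_zero comp_add[OF comp_proj[of 1 "Suc (Suc (Suc 0))"] comp_proj[of 2 "Suc (Suc (Suc 0))"]]] by simp
  have "prec (\<lambda>xs. 0) (\<lambda>ys. ys ! 1 + ys ! 2) n xs = n * xs ! 0" for n xs by (induction n) auto
  then show ?thesis by (intro comp_cong[OF X]) (auto simp: length_Suc_conv)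
qed

lemma comp_mult[ci]: "cmp k F \<Longrightarrow> cmp k G \<Longrightarrow> cmp k (\<lambda>xs. F xs * G xs)"
  by (rule compose2[OF comp_mult0])

lemma comp_cond0: "cmp (Suc (Suc (Suc 0))) (\<lambda>ys. if ys ! 0 = 0 then ys ! 1 else ys ! 2)"
proof -
  have X: "cmp (Suc (Suc (Suc 0))) (\<lambda>xs. prec (\<lambda>xs. xs ! 0) (\<lambda>ys. ys ! 3) (xs ! 0) (tl xs))"
    using comp_prec[OF comp_proj[of 0 "Suc (Suc 0)"] comp_proj[of 3 "Suc (Suc (Suc (Suc 0)))"]] by simp
  have "prec (\<lambda>xs. xs ! 0) (\<lambda>ys. ys ! 3) n xs = (if n = 0 then xs ! 0 else xs ! 1)" for n xs
    by (cases n) (auto simp: numeral_3_eq_3)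
  then show ?thesis by (intro comp_cong[OF X]) (auto simp: length_Suc_conv numeral_2_eq_2)
qed

lemma comp_If[ci]: "compP k P \<Longrightarrow> cmp k A \<Longrightarrow> cmp k B \<Longrightarrow> cmp k (\<lambda>xs. if P xs then A xs else B xs)"
  unfolding compP_def
  by (rule comp_cong[OF comp3[OF comp_cond0, of k "\<lambda>xs. ind (P xs)" B A]]) (auto simp: ind_def numeral_2_eq_2)

lemma compP_eq[ci]: "cmp k F \<Longrightarrow> cmp k G \<Longrightarrow> compP k (\<lambda>xs. F xs = G xs)"
  unfolding compP_def
  by (rule comp_cong[of _ "\<lambda>xs. 1 - ((F xs - G xs) + (G xs - F xs))"]) (auto intro!: ci simp: ind_def)

lemma compP_le[ci]: "cmp k F \<Longrightarrow> cmp k G \<Longrightarrow> compP k (\<lambda>xs. F xs \<le> G xs)"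
  unfolding compP_def
  by (rule comp_cong[of _ "\<lambda>xs. 1 - (F xs - G xs)"]) (auto intro!: ci simp: ind_def)

lemma compP_less[ci]: "cmp k F \<Longrightarrow> cmp k G \<Longrightarrow> compP k (\<lambda>xs. F xs < G xs)"
  unfolding compP_def
  by (rule comp_cong[of _ "\<lambda>xs. 1 - (Suc (F xs) - G xs)"]) (auto intro!: ci simp: ind_def)

lemma compP_and[ci]: "compP k P \<Longrightarrow> compP k Q \<Longrightarrow> compP k (\<lambda>xs. P xs \<and> Q xs)"
  unfolding compP_def
  by (rule comp_cong[of _ "\<lambda>xs. ind (P xs) * ind (Q xs)"]) (auto intro!: ci simp: ind_def)

lemma compP_not[ci]: "compP k P \<Longrightarrow> compP k (\<lambda>xs. \<not> P xs)"
  unfolding compP_def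
  by (rule comp_cong[of _ "\<lambda>xs. 1 - ind (P xs)"]) (auto intro!: ci simp: ind_def)

lemma compP_or[ci]: "compP k P \<Longrightarrow> compP k Q \<Longrightarrow> compP k (\<lambda>xs. P xs \<or> Q xs)"
proof -
  assume "compP k P" "compP k Q"
  then have "compP k (\<lambda>xs. \<not> (\<not> P xs \<and> \<not> Q xs))" by (intro ci)
  then show ?thesis by simp
qed

lemma compP_imp[ci]: "compP k P \<Longrightarrow> compP k Q \<Longrightarrow> compP k (\<lambda>xs. P xs \<longrightarrow> Q xs)"
proof -
  assume "compP k P" "compP k Q"
  then have "compP k (\<lambda>xs. \<not> P xs \<or> Q xs)" by (intro ci)
  then show ?thesis by simp
qed

lemma compP_const[ci]: "compP k (\<lambda>xs. b)"
  unfolding compP_def by (rule comp_const)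

lemma comp_drop_proj1[ci]: "Suc i < k \<Longrightarrow> cmp k (\<lambda>ys. tl ys ! i)"
  by (rule comp_cong[OF comp_proj[of "Suc i" k]]) (auto simp: nth_tl)
lemma comp_drop_proj2[ci]: "Suc (Suc i) < k \<Longrightarrow> cmp k (\<lambda>ys. tl (tl ys) ! i)"
  by (rule comp_cong[OF comp_proj[of "Suc (Suc i)" k]]) (auto simp: nth_tl)
lemma comp_drop_proj3[ci]: "Suc (Suc (Suc i)) < k \<Longrightarrow> cmp k (\<lambda>ys. tl (tl (tl ys)) ! i)"
  by (rule comp_cong[OF comp_proj[of "Suc (Suc (Suc i))" k]]) (auto simp: nth_tl)

lemma compP_ball[ci]:
  assumes "compP (Suc k) (\<lambda>ys. P (ys ! 0) (tl ys))" "cmp k N"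
  shows "compP k (\<lambda>xs. \<forall>j<N xs. P j xs)"
proof -
  let ?idx = "\<lambda>i. if i = 0 then 0 else Suc i"
  have X: "cmp (Suc (Suc k)) (\<lambda>ys. (\<lambda>zs. ind (P (zs ! 0) (tl zs))) (map (\<lambda>i. ys ! ?idx i) [0..<Suc k]))"
    by (rule comp_reindex) (use assms(1) in \<open>simp_all add: compP_def\<close>)
  have E: "map (\<lambda>i. ys ! ?idx i) [0..<Suc k] = ys ! 0 # tl (tl ys)" if "length ys = Suc (Suc k)" for ys :: "nat list"
  proof -
    from that obtain a b zs where ys: "ys = a # b # zs" "length zs = k" by (auto simp: length_Suc_conv)
    show ?thesis unfolding ys
    proof (rule nth_equalityI)
      fix i assume "i < length (map (\<lambda>i. (a # b # zs) ! ?idx i) [0..<Suc k])"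
      then show "map (\<lambda>i. (a # b # zs) ! ?idx i) [0..<Suc k] ! i = ((a # b # zs) ! 0 # tl (tl (a # b # zs))) ! i"
        by (cases i) (simp_all del: upt_Suc)
    qed (simp add: ys)
  qed
  have G: "cmp (Suc (Suc k)) (\<lambda>ys. ind (P (ys ! 0) (tl (tl ys))))"
    by (rule comp_cong[OF X]) (simp del: upt_Suc add: E)
  have Y: "cmp (Suc k) (\<lambda>xs. prec (\<lambda>_. 1) (\<lambda>ys. ind (P (ys ! 0) (tl (tl ys))) * ys ! 1) (xs ! 0) (tl xs))"
    by (rule comp_prec[OF comp_const comp_mult[OF G comp_proj]]) simp
  have Q: "prec (\<lambda>_. 1) (\<lambda>ys. ind (P (ys ! 0) (tl (tl ys))) * ys ! 1) n xs = ind (\<forall>j<n. P j xs)" for n xs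
  proof (induction n)
    case 0 then show ?case by (simp add: ind_def)
  next
    case (Suc n)
    have "(\<forall>j<Suc n. P j xs) = (P n xs \<and> (\<forall>j<n. P j xs))" by (auto simp: less_Suc_eq)
    then show ?case using Suc by (simp add: ind_def)
  qed
  have "cmp (Suc k) (\<lambda>xs. ind (\<forall>j<xs ! 0. P j (tl xs)))" by (rule comp_cong[OF Y]) (rule Q)
  from comp_subst0[OF this assms(2)] show ?thesis unfolding compP_def by simp
qed

lemma compP_bex[ci]:
  assumes "compP (Suc k) (\<lambda>ys. P (ys ! 0) (tl ys))" "cmp k N"
  shows "compP k (\<lambda>xs. \<exists>j<N xs. P j xs)"
proof -
  have "compP k (\<lambda>xs. \<not> (\<forall>j<N xs. \<not> P j xs))" by (intro ci assms)
  then show ?thesis by simp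
qed

lemma comp_least:
  assumes "compP (Suc k) (\<lambda>ys. P (ys ! 0) (tl ys))" "\<And>xs. length xs = k \<Longrightarrow> \<exists>n. P n xs"
  shows "cmp k (\<lambda>xs. LEAST n. P n xs)"
proof -
  have "cmp (Suc k) (\<lambda>ys. 1 - ind (P (ys ! 0) (tl ys)))" using assms(1) unfolding compP_def by (intro ci)
  from comp_mn[OF this] assms(2) have "cmp k (\<lambda>xs. LEAST n. 1 - ind (P n xs) = 0)" by (simp add: ind_def)
  moreover have "(\<lambda>n. 1 - ind (P n xs) = 0) = (\<lambda>n. P n xs)" for xs by (auto simp: ind_def)
  ultimately show ?thesis by simp
qed

lemma comp_iter:
  assumes "cmp (Suc 0) (\<lambda>ys. g (ys ! 0))" "cmp k N" "cmp k F"
  shows "cmp k (\<lambda>xs. (g ^^ N xs) (F xs))"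
proof -
  have X: "cmp (Suc (Suc 0)) (\<lambda>xs. prec (\<lambda>xs. xs ! 0) (\<lambda>ys. g (ys ! 1)) (xs ! 0) (tl xs))"
    using comp_prec[OF comp_proj[of 0 "Suc 0"] compose1[OF assms(1) comp_proj[of 1 "Suc (Suc (Suc 0))"]]] by simp
  have "prec (\<lambda>xs. xs ! 0) (\<lambda>ys. g (ys ! 1)) n xs = (g ^^ n) (xs ! 0)" for n xs by (induction n) auto
  then have "cmp (Suc (Suc 0)) (\<lambda>ys. (g ^^ (ys ! 0)) (ys ! 1))"
    by (intro comp_cong[OF X]) (auto simp: length_Suc_conv)
  from compose2[OF this assms(2,3)] show ?thesis .
qed


lemma cmp_triangle0: "cmp (Suc 0) (\<lambda>ys. triangle (ys ! 0))"
proof -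
  have X: "cmp (Suc 0) (\<lambda>xs. prec (\<lambda>_. 0) (\<lambda>ys. ys ! 1 + Suc (ys ! 0)) (xs ! 0) (tl xs))"
    by (rule comp_prec) (intro ci; simp)+
  have "prec (\<lambda>_. 0) (\<lambda>ys. ys ! 1 + Suc (ys ! 0)) n xs = triangle n" for n xs by (induction n) auto
  then show ?thesis by (intro comp_cong[OF X]) simp
qed

lemma cmp_triangle[ci]: "cmp k F \<Longrightarrow> cmp k (\<lambda>xs. triangle (F xs))"
  by (rule compose1[OF cmp_triangle0])

lemma cmp_pe[ci]: "cmp k F \<Longrightarrow> cmp k G \<Longrightarrow> cmp k (\<lambda>xs. prod_encode (F xs, G xs))"
  unfolding prod_encode_def by (simp, intro ci)

lemma pfst_least: "fst (prod_decode m) = (LEAST a. \<exists>b<Suc m. prod_encode (a, b) = m)"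
proof -
  obtain a0 b0 where d: "prod_decode m = (a0, b0)" by fastforce
  then have e: "prod_encode (a0, b0) = m" by (metis prod_decode_inverse)
  have "b0 \<le> m" using e le_prod_encode_2 by metis
  show ?thesis
  proof (rule Least_equality[symmetric])
    show "\<exists>b<Suc m. prod_encode (fst (prod_decode m), b) = m" using d e \<open>b0 \<le> m\<close> by auto
  next
    fix a assume "\<exists>b<Suc m. prod_encode (a, b) = m"
    then obtain b where "prod_encode (a, b) = m" by auto
    then have "prod_decode m = (a, b)" by (metis prod_encode_inverse)
    then show "fst (prod_decode m) \<le> a" by simp
  qed
qed

lemma psnd_least: "snd (prod_decode m) = (LEAST b. \<exists>a<Suc m. prod_encode (a, b) = m)"
proof -
  obtain a0 b0 where d: "prod_decode m = (a0, b0)" by fastforce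
  then have e: "prod_encode (a0, b0) = m" by (metis prod_decode_inverse)
  have "a0 \<le> m" using e le_prod_encode_1 by metis
  show ?thesis
  proof (rule Least_equality[symmetric])
    show "\<exists>a<Suc m. prod_encode (a, snd (prod_decode m)) = m" using d e \<open>a0 \<le> m\<close> by auto
  next
    fix b assume "\<exists>a<Suc m. prod_encode (a, b) = m"
    then obtain a where "prod_encode (a, b) = m" by auto
    then have "prod_decode m = (a, b)" by (metis prod_encode_inverse)
    then show "snd (prod_decode m) \<le> b" by simp
  qed
qed

lemma cmp_pfst0: "cmp (Suc 0) (\<lambda>ys. fst (prod_decode (ys ! 0)))"
proof -
  have "cmp (Suc 0) (\<lambda>xs. LEAST a. \<exists>b<Suc (xs ! 0). prod_encode (a, b) = xs ! 0)"
  proof (rule comp_least)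
    show "compP (Suc (Suc 0)) (\<lambda>ys. \<exists>b<Suc (tl ys ! 0). prod_encode (ys ! 0, b) = tl ys ! 0)"
      by (intro ci; simp)
  next
    fix xs :: "nat list"
    show "\<exists>n. \<exists>b<Suc (xs ! 0). prod_encode (n, b) = xs ! 0"
      using pfst_least[of "xs ! 0"] by (metis (no_types, lifting) LeastI_ex prod_decode_inverse le_prod_encode_2 prod.collapse less_Suc_eq_le)
  qed
  then show ?thesis by (simp add: pfst_least)
qed

lemma cmp_psnd0: "cmp (Suc 0) (\<lambda>ys. snd (prod_decode (ys ! 0)))"
proof -
  have "cmp (Suc 0) (\<lambda>xs. LEAST b. \<exists>a<Suc (xs ! 0). prod_encode (a, b) = xs ! 0)"
  proof (rule comp_least)
    show "compP (Suc (Suc 0)) (\<lambda>ys. \<exists>a<Suc (tl ys ! 0). prod_encode (a, ys ! 0) = tl ys ! 0)"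
      by (intro ci; simp)
  next
    fix xs :: "nat list"
    show "\<exists>n. \<exists>a<Suc (xs ! 0). prod_encode (a, n) = xs ! 0"
      by (metis le_prod_encode_1 less_Suc_eq_le prod.collapse prod_decode_inverse)
  qed
  then show ?thesis by (simp add: psnd_least)
qed

lemma cmp_pfst[ci]: "cmp k F \<Longrightarrow> cmp k (\<lambda>xs. fst (prod_decode (F xs)))"
  by (rule compose1[OF cmp_pfst0])
lemma cmp_psnd[ci]: "cmp k F \<Longrightarrow> cmp k (\<lambda>xs. snd (prod_decode (F xs)))"
  by (rule compose1[OF cmp_psnd0])

definition lhd :: "nat \<Rightarrow> nat" where "lhd c = fst (prod_decode (c - 1))"
definition ltl :: "nat \<Rightarrow> nat" where "ltl c = snd (prod_decode (c - 1))"
definition lnth :: "nat \<Rightarrow> nat \<Rightarrow> nat" where "lnth c j = lhd ((ltl ^^ j) c)"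

lemma cmp_lhd[ci]: "cmp k F \<Longrightarrow> cmp k (\<lambda>xs. lhd (F xs))"
  unfolding lhd_def by (intro ci)
lemma cmp_ltl[ci]: "cmp k F \<Longrightarrow> cmp k (\<lambda>xs. ltl (F xs))"
  unfolding ltl_def by (intro ci)

lemma cmp_ltl0: "cmp (Suc 0) (\<lambda>ys. ltl (ys ! 0))"
  by (intro ci; simp)

lemma ltl_iter: "(ltl ^^ k) c = list_encode (drop k (list_decode c))"
proof (induction k arbitrary: c)
  case 0 then show ?case by simp
next
  case (Suc k)
  have "(ltl ^^ Suc k) c = (ltl ^^ k) (ltl c)" by (simp add: funpow_swap1)
  also have "\<dots> = list_encode (drop k (list_decode (ltl c)))" by (rule Suc.IH)
  also have "list_decode (ltl c) = drop 1 (list_decode c)"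
  proof (cases c)
    case 0 then show ?thesis by (simp add: ltl_def prod_decode_def prod_decode_aux.simps)
  next
    case (Suc n) then show ?thesis by (simp add: ltl_def split: prod.split)
  qed
  finally show ?case by simp
qed

lemma lnth_eq: "j < length (list_decode c) \<Longrightarrow> lnth c j = list_decode c ! j"
proof -
  assume j: "j < length (list_decode c)"
  have "(ltl ^^ j) c = list_encode (drop j (list_decode c))" by (rule ltl_iter)
  moreover have "drop j (list_decode c) = list_decode c ! j # drop (Suc j) (list_decode c)"
    using j by (simp add: Cons_nth_drop_Suc)
  ultimately show ?thesis unfolding lnth_def lhd_def by simp
qed

lemma cmp_lnth[ci]: "cmp k F \<Longrightarrow> cmp k G \<Longrightarrow> cmp k (\<lambda>xs. lnth (F xs) (G xs))"
  unfolding lnth_def by (intro ci comp_iter[OF cmp_ltl0])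

lemma llen_least: "length (list_decode c) = (LEAST k. (ltl ^^ k) c = 0)"
proof (rule Least_equality[symmetric])
  show "(ltl ^^ length (list_decode c)) c = 0" by (simp add: ltl_iter)
next
  fix k assume "(ltl ^^ k) c = 0"
  then have "list_encode (drop k (list_decode c)) = list_encode []" by (simp add: ltl_iter)
  then have "drop k (list_decode c) = []" by (metis list_encode_inverse)
  then show "length (list_decode c) \<le> k" by simp
qed

lemma cmp_llen0: "cmp (Suc 0) (\<lambda>ys. length (list_decode (ys ! 0)))"
proof -
  have "cmp (Suc 0) (\<lambda>xs. LEAST k. (ltl ^^ k) (xs ! 0) = 0)"
  proof (rule comp_least)
    show "compP (Suc (Suc 0)) (\<lambda>ys. (ltl ^^ (ys ! 0)) (tl ys ! 0) = 0)"
      by (intro ci comp_iter[OF cmp_ltl0]; simp)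
  next
    fix xs :: "nat list"
    show "\<exists>n. (ltl ^^ n) (xs ! 0) = 0" by (metis llen_least LeastI_ex ltl_iter drop_all list_encode.simps(1) order_refl)
  qed
  then show ?thesis by (simp add: llen_least)
qed

lemma cmp_llen[ci]: "cmp k F \<Longrightarrow> cmp k (\<lambda>xs. length (list_decode (F xs)))"
  by (rule compose1[OF cmp_llen0])


abbreviation pf :: "nat \<Rightarrow> nat" where "pf m \<equiv> fst (prod_decode m)"
abbreviation ps :: "nat \<Rightarrow> nat" where "ps m \<equiv> snd (prod_decode m)"

definition cd :: "nat \<Rightarrow> nat" where "cd e = prod_encode (0, e)"
definition ev :: "nat \<Rightarrow> nat \<Rightarrow> nat \<Rightarrow> nat" where
  "ev e xs y = prod_encode (1, prod_encode (e, prod_encode (xs, y)))"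
definition lcons :: "nat \<Rightarrow> nat \<Rightarrow> nat" where "lcons x xs = Suc (prod_encode (x, xs))"

lemma cmp_cd[ci]: "cmp k F \<Longrightarrow> cmp k (\<lambda>xs. cd (F xs))"
  unfolding cd_def by (intro ci)
lemma cmp_ev[ci]: "cmp k F \<Longrightarrow> cmp k G \<Longrightarrow> cmp k H \<Longrightarrow> cmp k (\<lambda>xs. ev (F xs) (G xs) (H xs))"
  unfolding ev_def by (intro ci)
lemma cmp_lcons[ci]: "cmp k F \<Longrightarrow> cmp k G \<Longrightarrow> cmp k (\<lambda>xs. lcons (F xs) (G xs))"
  unfolding lcons_def by (intro ci)

lemma composeP3: "compP (Suc (Suc (Suc 0))) (\<lambda>ys. P (ys ! 0) (ys ! 1) (ys ! 2)) \<Longrightarrow> cmp k F \<Longrightarrow> cmp k G \<Longrightarrow> cmp k H \<Longrightarrow>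
  compP k (\<lambda>xs. P (F xs) (G xs) (H xs))"
  unfolding compP_def by (rule compose3[where g = "\<lambda>a b c. ind (P a b c)"])

definition earlier :: "nat \<Rightarrow> nat \<Rightarrow> nat \<Rightarrow> bool" where
  "earlier c i w \<longleftrightarrow> (\<exists>j<i. j < length (list_decode c) \<and> lnth c j = w)"

lemma compP_earlier[ci]: "cmp k F \<Longrightarrow> cmp k G \<Longrightarrow> cmp k H \<Longrightarrow> compP k (\<lambda>xs. earlier (F xs) (G xs) (H xs))"
  by (rule composeP3) (unfold earlier_def, intro ci; simp)

definition okCode :: "(nat \<Rightarrow> bool) \<Rightarrow> nat \<Rightarrow> bool" where
  "okCode mem e \<longleftrightarrow> (pf e = 0 \<and> ps e = 0) \<or> (pf e = 1 \<and> ps e = 0) \<or> pf e = 2 \<or>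
     (pf e = 3 \<and> mem (cd (pf (ps e))) \<and> (\<forall>k<length (list_decode (ps (ps e))). mem (cd (lnth (ps (ps e)) k)))) \<or>
     (pf e = 4 \<and> mem (cd (pf (ps e))) \<and> mem (cd (ps (ps e)))) \<or>
     (pf e = 5 \<and> mem (cd (ps e)))"

definition okEval :: "(nat \<Rightarrow> bool) \<Rightarrow> nat \<Rightarrow> nat \<Rightarrow> nat \<Rightarrow> nat \<Rightarrow> bool" where
  "okEval mem B e xs y \<longleftrightarrow>
     (pf e = 0 \<and> ps e = 0 \<and> y = 0) \<or>
     (pf e = 1 \<and> ps e = 0 \<and> xs \<noteq> 0 \<and> y = Suc (lhd xs)) \<or>
     (pf e = 2 \<and> ps e < length (list_decode xs) \<and> y = lnth xs (ps e)) \<or>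
     (pf e = 3 \<and> (\<exists>ys<B. length (list_decode ys) = length (list_decode (ps (ps e))) \<and>
        mem (ev (pf (ps e)) ys y) \<and>
        (\<forall>k<length (list_decode (ps (ps e))). mem (ev (lnth (ps (ps e)) k) xs (lnth ys k))))) \<or>
     (pf e = 4 \<and> xs \<noteq> 0 \<and> lhd xs = 0 \<and> mem (ev (pf (ps e)) (ltl xs) y) \<and> mem (cd (ps (ps e)))) \<or>
     (pf e = 4 \<and> xs \<noteq> 0 \<and> lhd xs \<noteq> 0 \<and> (\<exists>y'<B. mem (ev e (lcons (lhd xs - 1) (ltl xs)) y') \<and>
        mem (ev (ps (ps e)) (lcons (lhd xs - 1) (lcons y' (ltl xs))) y))) \<or>
     (pf e = 5 \<and> mem (ev (ps e) (lcons y xs) 0) \<and> (\<forall>m<y. \<exists>y'<B. mem (ev (ps e) (lcons m xs) (Suc y'))))"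

definition okG :: "(nat \<Rightarrow> bool) \<Rightarrow> nat \<Rightarrow> nat \<Rightarrow> bool" where
  "okG mem B v \<longleftrightarrow> (pf v = 0 \<and> okCode mem (ps v)) \<or>
     (pf v = 1 \<and> okEval mem B (pf (ps v)) (pf (ps (ps v))) (ps (ps (ps v))))"

definition okC :: "nat \<Rightarrow> nat \<Rightarrow> nat \<Rightarrow> bool" where
  "okC c i v = okG (earlier c i) (Suc c) v"

lemma compP_okC[ci]: "cmp k F \<Longrightarrow> cmp k G \<Longrightarrow> cmp k H \<Longrightarrow> compP k (\<lambda>xs. okC (F xs) (G xs) (H xs))"
  by (rule composeP3) (unfold okC_def okG_def okCode_def okEval_def, intro ci; simp)


lemma pe_collapse[simp]: "prod_encode (pf m, ps m) = m"
  by simp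

lemma code_inj: "code f = code g \<Longrightarrow> f = g"
proof (induction f arbitrary: g)
  case (Cn f gs)
  from Cn.prems obtain f' gs' where g: "g = Cn f' gs'" by (cases g) auto
  with Cn.prems have 1: "code f = code f'" and 2: "map code gs = map code gs'"
    by (auto simp: list_encode_eq)
  have "gs = gs'" using 2 Cn.IH(2)
  proof (induction gs arbitrary: gs')
    case Nil then show ?case by simp
  next
    case (Cons a as)
    then obtain b bs where "gs' = b # bs" by (cases gs') auto
    with Cons show ?case by auto
  qed
  with 1 Cn.IH(1) g show ?case by simp
qed (case_tac g; auto)+

lemma choice_list: "(\<forall>k<n. \<exists>g. P k g) \<Longrightarrow> \<exists>gs. length gs = n \<and> (\<forall>k<n. P k (gs ! k))"
proof -
  assume a: "\<forall>k<n. \<exists>g. P k g"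
  let ?gs = "map (\<lambda>k. SOME g. P k g) [0..<n]"
  have "\<forall>k<n. P k (?gs ! k)" using a by (auto intro: someI_ex)
  then show ?thesis by (intro exI[of _ ?gs]) simp
qed

lemma list_decode_nz: "xs \<noteq> 0 \<Longrightarrow> list_decode xs = lhd xs # list_decode (ltl xs)"
  by (cases xs) (auto simp: lhd_def ltl_def split: prod.split)

lemma list_decode_lcons[simp]: "list_decode (lcons a b) = a # list_decode b"
  by (simp add: lcons_def)

lemma lcons_list_encode: "lcons a (list_encode xs) = list_encode (a # xs)"
  by (simp add: lcons_def)

definition sem :: "nat \<Rightarrow> bool" where
  "sem v \<longleftrightarrow> (pf v = 0 \<longrightarrow> (\<exists>f. code f = ps v)) \<and>
     (pf v = 1 \<longrightarrow> (\<exists>f. code f = pf (ps v) \<and> eval f (list_decode (pf (ps (ps v)))) (ps (ps (ps v)))))"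

lemma sem_cd: "sem (cd e) \<Longrightarrow> \<exists>f. code f = e"
  by (simp add: sem_def cd_def)
lemma sem_ev: "sem (ev e xs y) \<Longrightarrow> \<exists>f. code f = e \<and> eval f (list_decode xs) y"
  by (simp add: sem_def ev_def)

lemma tag_eq: "pf e = t \<Longrightarrow> prod_encode (t, prod_encode (pf (ps e), ps (ps e))) = e"
  by (metis pe_collapse)
lemma tag_eq1: "pf e = t \<Longrightarrow> prod_encode (t, ps e) = e"
  by (metis pe_collapse)

lemma code_Pr_inv: "code P = prod_encode (4, x) \<Longrightarrow> \<exists>f g. P = Pr f g \<and> code f = pf x \<and> code g = ps x"
  by (cases P) auto

lemma okCode_sound:
  assumes mem: "\<And>w. mem w \<Longrightarrow> sem w" and ok: "okCode mem e"
  shows "\<exists>f. code f = e"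
proof -
  have e: "prod_encode (pf e, prod_encode (pf (ps e), ps (ps e))) = e" by simp
  have e3: "prod_encode (pf e, ps e) = e" by simp
  from ok[unfolded okCode_def] consider
    "pf e = 0 \<and> ps e = 0" | "pf e = 1 \<and> ps e = 0" | "pf e = 2" |
    "pf e = 3 \<and> mem (cd (pf (ps e))) \<and> (\<forall>k<length (list_decode (ps (ps e))). mem (cd (lnth (ps (ps e)) k)))" |
    "pf e = 4 \<and> mem (cd (pf (ps e))) \<and> mem (cd (ps (ps e)))" |
    "pf e = 5 \<and> mem (cd (ps e))" by blast
  then show ?thesis
  proof cases
    case 1 then show ?thesis by (intro exI[of _ Z]) (metis code.simps(1) pe_collapse)
  next
    case 2 then show ?thesis by (intro exI[of _ S]) (metis code.simps(2) pe_collapse)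
  next
    case 3 then show ?thesis by (intro exI[of _ "Proj (ps e)"]) (metis code.simps(3) pe_collapse)
  next
    case 4
    then obtain f where f: "code f = pf (ps e)" using mem sem_cd by blast
    let ?L = "list_decode (ps (ps e))"
    have "\<forall>k<length ?L. \<exists>g. code g = ?L ! k"
    proof (intro allI impI)
      fix k assume k: "k < length ?L"
      then have "mem (cd (lnth (ps (ps e)) k))" using 4 by blast
      then obtain g where "code g = lnth (ps (ps e)) k" using mem sem_cd by blast
      then show "\<exists>g. code g = ?L ! k" using lnth_eq[OF k] by auto
    qed
    from choice_list[OF this] obtain gs where gs: "length gs = length ?L" "\<forall>k<length ?L. code (gs ! k) = ?L ! k" by blast
    then have "map code gs = ?L" by (intro nth_equalityI) auto
    then have "list_encode (map code gs) = ps (ps e)" by simp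
    then have "code (Cn f gs) = e" using f 4 by (simp add: tag_eq tag_eq1)
    then show ?thesis by blast
  next
    case 5
    then obtain f g where "code f = pf (ps e)" "code g = ps (ps e)" using mem sem_cd by blast
    then have "code (Pr f g) = e" using 5 by (simp add: tag_eq tag_eq1)
    then show ?thesis by blast
  next
    case 6
    then obtain f where "code f = ps e" using mem sem_cd by blast
    then have "code (Mn f) = e" using 6 by (metis code.simps(6) pe_collapse)
    then show ?thesis by blast
  qed
qed

lemma okEval_sound:
  assumes mem: "\<And>w. mem w \<Longrightarrow> sem w" and ok: "okEval mem B e xs y"
  shows "\<exists>f. code f = e \<and> eval f (list_decode xs) y"
proof -
  have e: "prod_encode (pf e, prod_encode (pf (ps e), ps (ps e))) = e" by simp
  have e3: "prod_encode (pf e, ps e) = e" by simp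
  from ok[unfolded okEval_def] consider
     "pf e = 0 \<and> ps e = 0 \<and> y = 0" |
     "pf e = 1 \<and> ps e = 0 \<and> xs \<noteq> 0 \<and> y = Suc (lhd xs)" |
     "pf e = 2 \<and> ps e < length (list_decode xs) \<and> y = lnth xs (ps e)" |
     "pf e = 3 \<and> (\<exists>ys<B. length (list_decode ys) = length (list_decode (ps (ps e))) \<and>
        mem (ev (pf (ps e)) ys y) \<and>
        (\<forall>k<length (list_decode (ps (ps e))). mem (ev (lnth (ps (ps e)) k) xs (lnth ys k))))" |
     "pf e = 4 \<and> xs \<noteq> 0 \<and> lhd xs = 0 \<and> mem (ev (pf (ps e)) (ltl xs) y) \<and> mem (cd (ps (ps e)))" |
     "pf e = 4 \<and> xs \<noteq> 0 \<and> lhd xs \<noteq> 0 \<and> (\<exists>y'<B. mem (ev e (lcons (lhd xs - 1) (ltl xs)) y') \<and>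
        mem (ev (ps (ps e)) (lcons (lhd xs - 1) (lcons y' (ltl xs))) y))" |
     "pf e = 5 \<and> mem (ev (ps e) (lcons y xs) 0) \<and> (\<forall>m<y. \<exists>y'<B. mem (ev (ps e) (lcons m xs) (Suc y')))"
    by blast
  then show ?thesis
  proof cases
    case 1 then show ?thesis
      by (intro exI[of _ Z]) (metis code.simps(1) pe_collapse eval_Z)
  next
    case 2
    then have "code S = e" by (metis code.simps(2) pe_collapse)
    moreover have "eval S (list_decode xs) y" using 2 by (simp add: list_decode_nz eval_S)
    ultimately show ?thesis by blast
  next
    case 3
    then have "code (Proj (ps e)) = e" by (metis code.simps(3) pe_collapse)
    moreover have "eval (Proj (ps e)) (list_decode xs) y" using 3 by (simp add: lnth_eq eval_Proj)
    ultimately show ?thesis by blast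
  next
    case 4
    then obtain ys where ys: "length (list_decode ys) = length (list_decode (ps (ps e)))"
      "mem (ev (pf (ps e)) ys y)"
      "\<forall>k<length (list_decode (ps (ps e))). mem (ev (lnth (ps (ps e)) k) xs (lnth ys k))" by blast
    obtain f where f: "code f = pf (ps e)" "eval f (list_decode ys) y" using ys(2) mem sem_ev by blast
    let ?L = "list_decode (ps (ps e))"
    let ?Y = "list_decode ys"
    have "\<forall>k<length ?L. \<exists>g. code g = ?L ! k \<and> eval g (list_decode xs) (?Y ! k)"
    proof (intro allI impI)
      fix k assume k: "k < length ?L"
      then have "mem (ev (lnth (ps (ps e)) k) xs (lnth ys k))" using ys(3) by blast
      then obtain g where "code g = lnth (ps (ps e)) k" "eval g (list_decode xs) (lnth ys k)" using mem sem_ev by blast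
      moreover have "k < length ?Y" using k ys(1) by simp
      ultimately show "\<exists>g. code g = ?L ! k \<and> eval g (list_decode xs) (?Y ! k)" using lnth_eq[OF k] lnth_eq by auto
    qed
    from choice_list[OF this] obtain gs where gs: "length gs = length ?L"
      "\<forall>k<length ?L. code (gs ! k) = ?L ! k \<and> eval (gs ! k) (list_decode xs) (?Y ! k)" by blast
    then have "map code gs = ?L" by (intro nth_equalityI) auto
    then have "list_encode (map code gs) = ps (ps e)" by simp
    then have "code (Cn f gs) = e" using f 4 by (simp add: tag_eq tag_eq1)
    moreover have "list_all2 (\<lambda>g y. eval g (list_decode xs) y) gs ?Y"
      using gs ys(1) by (auto simp: list_all2_conv_all_nth)
    then have "eval (Cn f gs) (list_decode xs) y" using f(2) by (rule eval_Cn)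
    ultimately show ?thesis by blast
  next
    case 5
    then obtain f g where f: "code f = pf (ps e)" "eval f (list_decode (ltl xs)) y" and g: "code g = ps (ps e)"
      using mem sem_cd sem_ev by blast
    have "code (Pr f g) = e" using 5 f g by (simp add: tag_eq tag_eq1)
    moreover have "list_decode xs = 0 # list_decode (ltl xs)" using 5 list_decode_nz by metis
    then have "eval (Pr f g) (list_decode xs) y" using f by (simp add: eval_Pr0)
    ultimately show ?thesis by blast
  next
    case 6
    then obtain y' where y': "mem (ev e (lcons (lhd xs - 1) (ltl xs)) y')"
        "mem (ev (ps (ps e)) (lcons (lhd xs - 1) (lcons y' (ltl xs))) y)" by blast
    obtain P where P: "code P = e" "eval P ((lhd xs - 1) # list_decode (ltl xs)) y'"
      using y'(1) mem sem_ev by fastforce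
    obtain g where g: "code g = ps (ps e)" "eval g ((lhd xs - 1) # y' # list_decode (ltl xs)) y"
      using y'(2) mem sem_ev by fastforce
    have "code P = prod_encode (4, ps e)" using P(1) 6 by (metis pe_collapse)
    from code_Pr_inv[OF this] obtain f1 g1 where fg: "P = Pr f1 g1" "code g1 = ps (ps e)" by blast
    with g have "g1 = g" using code_inj by metis
    have xs: "list_decode xs = Suc (lhd xs - 1) # list_decode (ltl xs)" using 6 list_decode_nz by simp
    have "eval (Pr f1 g1) (Suc (lhd xs - 1) # list_decode (ltl xs)) y"
      using P(2) g(2) fg \<open>g1 = g\<close> by (auto intro: eval_PrS)
    moreover have "code (Pr f1 g1) = e" using P(1) fg by simp
    ultimately show ?thesis using xs by (intro exI[of _ "Pr f1 g1"]) simp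
  next
    case 7
    then obtain f where f: "code f = ps e" "eval f (y # list_decode xs) 0" using mem sem_ev by fastforce
    have "\<forall>m<y. \<exists>z. eval f (m # list_decode xs) (Suc z)"
    proof (intro allI impI)
      fix m assume "m < y"
      with 7 obtain y' where "mem (ev (ps e) (lcons m xs) (Suc y'))" by blast
      then obtain f' where "code f' = ps e" "eval f' (m # list_decode xs) (Suc y')" using mem sem_ev by fastforce
      then show "\<exists>z. eval f (m # list_decode xs) (Suc z)" using f(1) code_inj by metis
    qed
    then have "eval (Mn f) (list_decode xs) y" using f(2) by (intro eval_Mn)
    moreover have "code (Mn f) = e" using f 7 by (metis code.simps(6) pe_collapse)
    ultimately show ?thesis by blast
  qed
qed

lemma okG_sound: "(\<And>w. mem w \<Longrightarrow> sem w) \<Longrightarrow> okG mem B v \<Longrightarrow> sem v"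
proof -
  assume m: "\<And>w. mem w \<Longrightarrow> sem w" and ok: "okG mem B v"
  consider "pf v = 0" "okCode mem (ps v)" | "pf v = 1" "okEval mem B (pf (ps v)) (pf (ps (ps v))) (ps (ps (ps v)))"
    using ok unfolding okG_def by argo
  then show "sem v"
  proof cases
    case 1 then show ?thesis using okCode_sound[OF m] unfolding sem_def by auto
  next
    case 2 then show ?thesis using okEval_sound[OF m] unfolding sem_def by auto
  qed
qed


definition validL :: "nat list \<Rightarrow> bool" where
  "validL L \<longleftrightarrow> (\<forall>i<length L. \<exists>B. okG (\<lambda>w. w \<in> set (take i L)) B (L ! i))"

lemma okCode_mono: "(\<And>w. mem w \<Longrightarrow> mem' w) \<Longrightarrow> okCode mem e \<Longrightarrow> okCode mem' e"
  unfolding okCode_def by blast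
lemma okEval_mono: assumes m: "\<And>w. mem w \<Longrightarrow> mem' w" and ok: "okEval mem B e xs y" shows "okEval mem' B e xs y"
proof -
  from ok[unfolded okEval_def] consider
     "pf e = 0 \<and> ps e = 0 \<and> y = 0" |
     "pf e = 1 \<and> ps e = 0 \<and> xs \<noteq> 0 \<and> y = Suc (lhd xs)" |
     "pf e = 2 \<and> ps e < length (list_decode xs) \<and> y = lnth xs (ps e)" |
     "pf e = 3 \<and> (\<exists>ys<B. length (list_decode ys) = length (list_decode (ps (ps e))) \<and>
        mem (ev (pf (ps e)) ys y) \<and>
        (\<forall>k<length (list_decode (ps (ps e))). mem (ev (lnth (ps (ps e)) k) xs (lnth ys k))))" |
     "pf e = 4 \<and> xs \<noteq> 0 \<and> lhd xs = 0 \<and> mem (ev (pf (ps e)) (ltl xs) y) \<and> mem (cd (ps (ps e)))" |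
     "pf e = 4 \<and> xs \<noteq> 0 \<and> lhd xs \<noteq> 0 \<and> (\<exists>y'<B. mem (ev e (lcons (lhd xs - 1) (ltl xs)) y') \<and>
        mem (ev (ps (ps e)) (lcons (lhd xs - 1) (lcons y' (ltl xs))) y))" |
     "pf e = 5 \<and> mem (ev (ps e) (lcons y xs) 0) \<and> (\<forall>m<y. \<exists>y'<B. mem (ev (ps e) (lcons m xs) (Suc y')))"
    by blast
  then show ?thesis
  proof cases
    case 1 then show ?thesis unfolding okEval_def by blast
  next
    case 2 then show ?thesis unfolding okEval_def by blast
  next
    case 3 then show ?thesis unfolding okEval_def by blast
  next
    case 4 then have "pf e = 3 \<and> (\<exists>ys<B. length (list_decode ys) = length (list_decode (ps (ps e))) \<and>
        mem' (ev (pf (ps e)) ys y) \<and>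
        (\<forall>k<length (list_decode (ps (ps e))). mem' (ev (lnth (ps (ps e)) k) xs (lnth ys k))))" using m by blast
    then show ?thesis unfolding okEval_def by (intro disjI2 disjI1)
  next
    case 5 then have "pf e = 4 \<and> xs \<noteq> 0 \<and> lhd xs = 0 \<and> mem' (ev (pf (ps e)) (ltl xs) y) \<and> mem' (cd (ps (ps e)))" using m by blast
    then show ?thesis unfolding okEval_def by (intro disjI2 disjI1)
  next
    case 6 then have "pf e = 4 \<and> xs \<noteq> 0 \<and> lhd xs \<noteq> 0 \<and> (\<exists>y'<B. mem' (ev e (lcons (lhd xs - 1) (ltl xs)) y') \<and>
        mem' (ev (ps (ps e)) (lcons (lhd xs - 1) (lcons y' (ltl xs))) y))" using m by blast
    then show ?thesis unfolding okEval_def by (intro disjI2 disjI1)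
  next
    case 7 then have "pf e = 5 \<and> mem' (ev (ps e) (lcons y xs) 0) \<and> (\<forall>m<y. \<exists>y'<B. mem' (ev (ps e) (lcons m xs) (Suc y')))" using m by blast
    then show ?thesis unfolding okEval_def by (intro disjI2)
  qed
qed
lemma okG_mono: "(\<And>w. mem w \<Longrightarrow> mem' w) \<Longrightarrow> okG mem B v \<Longrightarrow> okG mem' B v"
  unfolding okG_def using okCode_mono okEval_mono by blast

lemma validL_Nil: "validL []" by (simp add: validL_def)

lemma validL_append: "validL L1 \<Longrightarrow> validL L2 \<Longrightarrow> validL (L1 @ L2)"
  unfolding validL_def
proof (intro allI impI)
  fix i assume v1: "\<forall>i<length L1. \<exists>B. okG (\<lambda>w. w \<in> set (take i L1)) B (L1 ! i)"
    and v2: "\<forall>i<length L2. \<exists>B. okG (\<lambda>w. w \<in> set (take i L2)) B (L2 ! i)"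
    and i: "i < length (L1 @ L2)"
  show "\<exists>B. okG (\<lambda>w. w \<in> set (take i (L1 @ L2))) B ((L1 @ L2) ! i)"
  proof (cases "i < length L1")
    case True
    then have "take i (L1 @ L2) = take i L1" "(L1 @ L2) ! i = L1 ! i" by (simp_all add: nth_append)
    then show ?thesis using v1 True by metis
  next
    case False
    define j where "j = i - length L1"
    have j: "i = length L1 + j" "j < length L2" using i False unfolding j_def by auto
    then obtain B where o: "okG (\<lambda>w. w \<in> set (take j L2)) B (L2 ! j)" using v2 by blast
    have t: "take i (L1 @ L2) = L1 @ take j L2" using j by simp
    have n: "(L1 @ L2) ! i = L2 ! j" using j by (simp add: nth_append)
    have "okG (\<lambda>w. w \<in> set (take i (L1 @ L2))) B (L2 ! j)"
      by (rule okG_mono[OF _ o]) (simp only: t, simp)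
    then show ?thesis unfolding n by blast
  qed
qed

lemma validL_snoc: "validL L \<Longrightarrow> okG (\<lambda>w. w \<in> set L) B v \<Longrightarrow> validL (L @ [v])"
  unfolding validL_def
proof (intro allI impI)
  fix i assume v: "\<forall>i<length L. \<exists>B. okG (\<lambda>w. w \<in> set (take i L)) B (L ! i)"
    and o: "okG (\<lambda>w. w \<in> set L) B v" and i: "i < length (L @ [v])"
  show "\<exists>B. okG (\<lambda>w. w \<in> set (take i (L @ [v]))) B ((L @ [v]) ! i)"
  proof (cases "i < length L")
    case True then show ?thesis using v by (simp add: nth_append)
  next
    case False then have "i = length L" using i by simp
    then show ?thesis using o by auto
  qed
qed

lemma validL_sound: "validL L \<Longrightarrow> i < length L \<Longrightarrow> sem (L ! i)"
proof (induction i rule: less_induct)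
  case (less i)
  then obtain B where o: "okG (\<lambda>w. w \<in> set (take i L)) B (L ! i)" unfolding validL_def by blast
  show ?case
  proof (rule okG_sound[OF _ o])
    fix w assume "w \<in> set (take i L)"
    then obtain j where "j < i" "j < length L" "w = L ! j" by (auto simp: in_set_conv_nth)
    then show "sem w" using less by blast
  qed
qed

lemma collect:
  assumes "\<forall>k<(n::nat). \<exists>L. validL L \<and> v k \<in> set L"
  shows "\<exists>L. validL L \<and> (\<forall>k<n. v k \<in> set L)"
  using assms
proof (induction n)
  case 0 then show ?case using validL_Nil by blast
next
  case (Suc n)
  then obtain L1 where 1: "validL L1" "\<forall>k<n. v k \<in> set L1" by auto
  from Suc.prems obtain L2 where 2: "validL L2" "v n \<in> set L2" by blast
  have "validL (L1 @ L2)" using 1 2 validL_append by blast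
  moreover have "\<forall>k<Suc n. v k \<in> set (L1 @ L2)" using 1 2 less_Suc_eq by auto
  ultimately show ?case by blast
qed

lemma lhd_enc[simp]: "lhd (list_encode (x # xs)) = x" by (simp add: lhd_def)
lemma ltl_enc[simp]: "ltl (list_encode (x # xs)) = list_encode xs" by (simp add: ltl_def)

lemma code_complete: "\<exists>L. validL L \<and> cd (code f) \<in> set L"
proof (induction f)
  case Z
  have "validL ([] @ [cd (code Z)])" by (rule validL_snoc[OF validL_Nil, of 0]) (simp add: okG_def okCode_def cd_def)
  then show ?case by auto
next
  case S
  have "validL ([] @ [cd (code S)])" by (rule validL_snoc[OF validL_Nil, of 0]) (simp add: okG_def okCode_def cd_def)
  then show ?case by auto
next
  case (Proj i)
  have "validL ([] @ [cd (code (Proj i))])" by (rule validL_snoc[OF validL_Nil, of 0]) (simp add: okG_def okCode_def cd_def)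
  then show ?case by auto
next
  case (Cn f gs)
  from Cn.IH(1) obtain L1 where 1: "validL L1" "cd (code f) \<in> set L1" by blast
  have "\<forall>k<length gs. \<exists>L. validL L \<and> cd (code (gs ! k)) \<in> set L" using Cn.IH(2) by simp
  from collect[OF this] obtain L2 where 2: "validL L2" "\<forall>k<length gs. cd (code (gs ! k)) \<in> set L2" by blast
  let ?L = "L1 @ L2"
  have "okG (\<lambda>w. w \<in> set ?L) 0 (cd (code (Cn f gs)))"
    unfolding okG_def
  proof (intro disjI1 conjI)
    show "pf (cd (code (Cn f gs))) = 0" by (simp add: cd_def)
    show "okCode (\<lambda>w. w \<in> set ?L) (ps (cd (code (Cn f gs))))"
      unfolding okCode_def cd_def using 1 2 by (simp add: lnth_eq cd_def)
  qed
  from validL_snoc[OF validL_append[OF 1(1) 2(1)] this] show ?case by auto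
next
  case (Pr f g)
  from Pr.IH obtain L1 L2 where "validL L1" "cd (code f) \<in> set L1" "validL L2" "cd (code g) \<in> set L2" by blast
  moreover have "okG (\<lambda>w. w \<in> set (L1 @ L2)) 0 (cd (code (Pr f g)))"
    using calculation by (simp add: okG_def okCode_def cd_def)
  ultimately have "validL ((L1 @ L2) @ [cd (code (Pr f g))])" by (intro validL_snoc validL_append)
  then show ?case by auto
next
  case (Mn f)
  from Mn.IH obtain L1 where "validL L1" "cd (code f) \<in> set L1" by blast
  moreover have "okG (\<lambda>w. w \<in> set L1) 0 (cd (code (Mn f)))"
    using calculation by (simp add: okG_def okCode_def cd_def)
  ultimately have "validL (L1 @ [cd (code (Mn f))])" by (intro validL_snoc)
  then show ?case by auto
qed


lemma okG_ev[simp]: "okG mem B (ev e xs y) = okEval mem B e xs y"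
  by (simp add: okG_def ev_def)

lemma okE_Z: "pf e = 0 \<Longrightarrow> ps e = 0 \<Longrightarrow> y = 0 \<Longrightarrow> okEval mem B e xs y"
  unfolding okEval_def by blast
lemma okE_S: "pf e = 1 \<Longrightarrow> ps e = 0 \<Longrightarrow> xs \<noteq> 0 \<Longrightarrow> y = Suc (lhd xs) \<Longrightarrow> okEval mem B e xs y"
  unfolding okEval_def by blast
lemma okE_Proj: "pf e = 2 \<Longrightarrow> ps e < length (list_decode xs) \<Longrightarrow> y = lnth xs (ps e) \<Longrightarrow> okEval mem B e xs y"
  unfolding okEval_def by blast
lemma okE_Cn: "pf e = 3 \<Longrightarrow> ys < B \<Longrightarrow> length (list_decode ys) = length (list_decode (ps (ps e))) \<Longrightarrow>
        mem (ev (pf (ps e)) ys y) \<Longrightarrow>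
        (\<forall>k<length (list_decode (ps (ps e))). mem (ev (lnth (ps (ps e)) k) xs (lnth ys k))) \<Longrightarrow> okEval mem B e xs y"
  unfolding okEval_def by blast
lemma okE_Pr0: "pf e = 4 \<Longrightarrow> xs \<noteq> 0 \<Longrightarrow> lhd xs = 0 \<Longrightarrow> mem (ev (pf (ps e)) (ltl xs) y) \<Longrightarrow> mem (cd (ps (ps e))) \<Longrightarrow>
  okEval mem B e xs y"
  unfolding okEval_def by blast
lemma okE_PrS: "pf e = 4 \<Longrightarrow> xs \<noteq> 0 \<Longrightarrow> lhd xs \<noteq> 0 \<Longrightarrow> y' < B \<Longrightarrow> mem (ev e (lcons (lhd xs - 1) (ltl xs)) y') \<Longrightarrow>
        mem (ev (ps (ps e)) (lcons (lhd xs - 1) (lcons y' (ltl xs))) y) \<Longrightarrow> okEval mem B e xs y"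
  unfolding okEval_def by blast
lemma okE_Mn: "pf e = 5 \<Longrightarrow> mem (ev (ps e) (lcons y xs) 0) \<Longrightarrow> (\<forall>m<y. \<exists>y'<B. mem (ev (ps e) (lcons m xs) (Suc y'))) \<Longrightarrow>
  okEval mem B e xs y"
  unfolding okEval_def by blast

lemma add_entry: "validL L \<Longrightarrow> okG (\<lambda>w. w \<in> set L) B v \<Longrightarrow> \<exists>L'. validL L' \<and> v \<in> set L'"
  using validL_snoc by fastforce

lemma list_encode_nz: "list_encode (x # xs) \<noteq> 0" by simp

lemma eval_complete: "eval f X y \<Longrightarrow> \<exists>L. validL L \<and> ev (code f) (list_encode X) y \<in> set L"
proof (induction rule: eval.induct)
  case (eval_Z xs)
  have "okEval (\<lambda>w. w \<in> set []) 0 (code Z) (list_encode xs) 0" by (rule okE_Z) simp_all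
  then show ?case using add_entry[OF validL_Nil] by simp
next
  case (eval_S x xs)
  have "okEval (\<lambda>w. w \<in> set []) 0 (code S) (list_encode (x # xs)) (Suc x)" by (rule okE_S) (simp_all add: lhd_def)
  then show ?case using add_entry[OF validL_Nil] by simp
next
  case (eval_Proj i xs)
  have "okEval (\<lambda>w. w \<in> set []) 0 (code (Proj i)) (list_encode xs) (xs ! i)"
    by (rule okE_Proj) (simp_all add: eval_Proj lnth_eq)
  then show ?case using add_entry[OF validL_Nil] by simp
next
  case (eval_Cn xs gs ys f z)
  from eval_Cn.IH(2) obtain L1 where 1: "validL L1" "ev (code f) (list_encode ys) z \<in> set L1" by blast
  have len: "length ys = length gs" using eval_Cn.IH(1) by (simp add: list_all2_lengthD)
  have "\<forall>k<length gs. \<exists>L. validL L \<and> ev (code (gs ! k)) (list_encode xs) (ys ! k) \<in> set L"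
    using eval_Cn.IH(1) by (auto simp: list_all2_conv_all_nth)
  from collect[OF this] obtain L2 where 2: "validL L2" "\<forall>k<length gs. ev (code (gs ! k)) (list_encode xs) (ys ! k) \<in> set L2"
    by blast
  have "okEval (\<lambda>w. w \<in> set (L1 @ L2)) (Suc (list_encode ys)) (code (Cn f gs)) (list_encode xs) z"
  proof (rule okE_Cn[of _ "list_encode ys"])
    show "\<forall>k<length (list_decode (ps (ps (code (Cn f gs))))).
       ev (lnth (ps (ps (code (Cn f gs)))) k) (list_encode xs) (lnth (list_encode ys) k) \<in> set (L1 @ L2)"
      using 2 len by (simp add: lnth_eq)
  qed (use 1 len in simp_all)
  then show ?case using add_entry[OF validL_append[OF 1(1) 2(1)]] by simp
next
  case (eval_Pr0 f xs y g)
  from eval_Pr0.IH obtain L1 where 1: "validL L1" "ev (code f) (list_encode xs) y \<in> set L1" by blast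
  from code_complete[of g] obtain L2 where 2: "validL L2" "cd (code g) \<in> set L2" by blast
  have "okEval (\<lambda>w. w \<in> set (L1 @ L2)) 0 (code (Pr f g)) (list_encode (0 # xs)) y"
    by (rule okE_Pr0) (use 1 2 in \<open>simp_all add: lhd_def ltl_def\<close>)
  then show ?case using add_entry[OF validL_append[OF 1(1) 2(1)]] by simp
next
  case (eval_PrS f g n xs y z)
  from eval_PrS.IH(1) obtain L1 where 1: "validL L1" "ev (code (Pr f g)) (list_encode (n # xs)) y \<in> set L1" by blast
  from eval_PrS.IH(2) obtain L2 where 2: "validL L2" "ev (code g) (list_encode (n # y # xs)) z \<in> set L2" by blast
  have "okEval (\<lambda>w. w \<in> set (L1 @ L2)) (Suc y) (code (Pr f g)) (list_encode (Suc n # xs)) z"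
    by (rule okE_PrS[of _ _ y]) (use 1 2 in \<open>simp_all add: lhd_def ltl_def lcons_def\<close>)
  then show ?case using add_entry[OF validL_append[OF 1(1) 2(1)]] by simp
next
  case (eval_Mn f n xs)
  from eval_Mn.IH(1) obtain L1 where 1: "validL L1" "ev (code f) (list_encode (n # xs)) 0 \<in> set L1" by blast
  have "\<forall>m. \<exists>y. m < n \<longrightarrow> (\<exists>L. validL L \<and> ev (code f) (list_encode (m # xs)) (Suc y) \<in> set L)"
    using eval_Mn.IH(2) by blast
  then obtain yf where yf: "\<forall>m<n. \<exists>L. validL L \<and> ev (code f) (list_encode (m # xs)) (Suc (yf m)) \<in> set L"
    by (metis choice)
  from collect[OF yf] obtain L2 where 2: "validL L2" "\<forall>m<n. ev (code f) (list_encode (m # xs)) (Suc (yf m)) \<in> set L2"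
    by blast
  have "okEval (\<lambda>w. w \<in> set (L1 @ L2)) (Suc (sum yf {..<n})) (code (Mn f)) (list_encode xs) n"
  proof (rule okE_Mn)
    show "\<forall>m<n. \<exists>y'<Suc (sum yf {..<n}). ev (ps (code (Mn f))) (lcons m (list_encode xs)) (Suc y') \<in> set (L1 @ L2)"
    proof (intro allI impI)
      fix m assume m: "m < n"
      have "yf m \<le> sum yf {..<n}" using m by (intro member_le_sum) auto
      then show "\<exists>y'<Suc (sum yf {..<n}). ev (ps (code (Mn f))) (lcons m (list_encode xs)) (Suc y') \<in> set (L1 @ L2)"
        using 2 m by (intro exI[of _ "yf m"]) (auto simp: lcons_list_encode)
    qed
  qed (use 1 in \<open>simp_all add: lcons_list_encode\<close>)
  then show ?case using add_entry[OF validL_append[OF 1(1) 2(1)]] by simp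
qed


lemma mem_le: "w \<in> set (list_decode c) \<Longrightarrow> w \<le> c"
proof (induction c rule: list_decode.induct)
  case 1 then show ?case by simp
next
  case (2 n)
  obtain x y where d: "prod_decode n = (x, y)" by fastforce
  then have n: "n = prod_encode (x, y)" by (metis prod_decode_inverse)
  from 2 d have "w = x \<or> w \<in> set (list_decode y)" by simp
  then show ?case
  proof
    assume "w = x" then show ?thesis using n le_prod_encode_1[of x y] by simp
  next
    assume w: "w \<in> set (list_decode y)"
    have "w \<le> y" using 2(1)[OF d[symmetric] w] .
    then show ?thesis using n le_prod_encode_2[of y x] by simp
  qed
qed

lemma ev_ge1: "xs \<le> ev e xs y"
  unfolding ev_def by (meson le_prod_encode_1 le_prod_encode_2 order_trans)
lemma ev_ge2: "y \<le> ev e xs y"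
  unfolding ev_def by (meson le_prod_encode_1 le_prod_encode_2 order_trans)

lemma okEval_bound: assumes m: "\<And>w. mem w \<Longrightarrow> w < B0" and ok: "okEval mem B e xs y" shows "okEval mem B0 e xs y"
proof -
  have b1: "a < B0" if "mem (ev e' a b)" for e' a b using m[OF that] ev_ge1[of a e' b] by simp
  have b2: "b < B0" if "mem (ev e' a b)" for e' a b using m[OF that] ev_ge2[of b e' a] by simp
  from ok[unfolded okEval_def] consider
     "pf e = 0 \<and> ps e = 0 \<and> y = 0" |
     "pf e = 1 \<and> ps e = 0 \<and> xs \<noteq> 0 \<and> y = Suc (lhd xs)" |
     "pf e = 2 \<and> ps e < length (list_decode xs) \<and> y = lnth xs (ps e)" |
     "pf e = 3 \<and> (\<exists>ys<B. length (list_decode ys) = length (list_decode (ps (ps e))) \<and>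
        mem (ev (pf (ps e)) ys y) \<and>
        (\<forall>k<length (list_decode (ps (ps e))). mem (ev (lnth (ps (ps e)) k) xs (lnth ys k))))" |
     "pf e = 4 \<and> xs \<noteq> 0 \<and> lhd xs = 0 \<and> mem (ev (pf (ps e)) (ltl xs) y) \<and> mem (cd (ps (ps e)))" |
     "pf e = 4 \<and> xs \<noteq> 0 \<and> lhd xs \<noteq> 0 \<and> (\<exists>y'<B. mem (ev e (lcons (lhd xs - 1) (ltl xs)) y') \<and>
        mem (ev (ps (ps e)) (lcons (lhd xs - 1) (lcons y' (ltl xs))) y))" |
     "pf e = 5 \<and> mem (ev (ps e) (lcons y xs) 0) \<and> (\<forall>m<y. \<exists>y'<B. mem (ev (ps e) (lcons m xs) (Suc y')))"
    by blast
  then show ?thesis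
  proof cases
    case 1 then show ?thesis unfolding okEval_def by blast
  next
    case 2 then show ?thesis unfolding okEval_def by blast
  next
    case 3 then show ?thesis unfolding okEval_def by blast
  next
    case 4 then obtain ys where ys: "length (list_decode ys) = length (list_decode (ps (ps e)))"
        "mem (ev (pf (ps e)) ys y)"
        "\<forall>k<length (list_decode (ps (ps e))). mem (ev (lnth (ps (ps e)) k) xs (lnth ys k))" by blast
    show ?thesis by (rule okE_Cn[of _ ys]) (use 4 ys b1[OF ys(2)] in auto)
  next
    case 5 then show ?thesis by (intro okE_Pr0) auto
  next
    case 6 then obtain y' where y': "mem (ev e (lcons (lhd xs - 1) (ltl xs)) y')"
        "mem (ev (ps (ps e)) (lcons (lhd xs - 1) (lcons y' (ltl xs))) y)" by blast
    show ?thesis by (rule okE_PrS[of _ _ y']) (use 6 y' b2[OF y'(1)] in auto)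
  next
    case 7 show ?thesis
    proof (rule okE_Mn)
      show "\<forall>m<y. \<exists>y'<B0. mem (ev (ps e) (lcons m xs) (Suc y'))"
      proof (intro allI impI)
        fix m assume "m < y"
        then obtain y' where "mem (ev (ps e) (lcons m xs) (Suc y'))" using 7 by blast
        moreover have "Suc y' < B0" using b2[OF calculation] .
        ultimately show "\<exists>y'<B0. mem (ev (ps e) (lcons m xs) (Suc y'))" using Suc_lessD by blast
      qed
    qed (use 7 in auto)
  qed
qed

lemma okG_bound: "(\<And>w. mem w \<Longrightarrow> w < B0) \<Longrightarrow> okG mem B v \<Longrightarrow> okG mem B0 v"
  unfolding okG_def using okEval_bound by blast

definition validC :: "nat \<Rightarrow> bool" where
  "validC c \<longleftrightarrow> (\<forall>i<length (list_decode c). okC c i (lnth c i))"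

lemma earlier_eq: "earlier c i = (\<lambda>w. w \<in> set (take i (list_decode c)))"
proof (rule ext)
  fix w
  show "earlier c i w = (w \<in> set (take i (list_decode c)))"
    unfolding earlier_def in_set_conv_nth using lnth_eq by auto
qed

lemma validC_iff: "validC c \<longleftrightarrow> validL (list_decode c)"
proof -
  let ?L = "list_decode c"
  have "okC c i (lnth c i) \<longleftrightarrow> (\<exists>B. okG (\<lambda>w. w \<in> set (take i ?L)) B (?L ! i))" if i: "i < length ?L" for i
  proof
    assume "okC c i (lnth c i)" then show "\<exists>B. okG (\<lambda>w. w \<in> set (take i ?L)) B (?L ! i)"
      unfolding okC_def earlier_eq lnth_eq[OF i] by blast
  next
    assume "\<exists>B. okG (\<lambda>w. w \<in> set (take i ?L)) B (?L ! i)"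
    then obtain B where o: "okG (\<lambda>w. w \<in> set (take i ?L)) B (?L ! i)" by blast
    have "okG (\<lambda>w. w \<in> set (take i ?L)) (Suc c) (?L ! i)"
    proof (rule okG_bound[OF _ o])
      fix w assume "w \<in> set (take i ?L)"
      then have "w \<in> set ?L" by (meson in_set_takeD)
      then show "w < Suc c" using mem_le by (simp add: le_imp_less_Suc)
    qed
    then show "okC c i (lnth c i)" unfolding okC_def earlier_eq lnth_eq[OF i] .
  qed
  then show ?thesis unfolding validC_def validL_def by blast
qed

definition H :: "nat \<Rightarrow> nat \<Rightarrow> nat \<Rightarrow> bool" where
  "H t e x \<longleftrightarrow> (\<exists>c<Suc t. validC c \<and> (\<exists>i<length (list_decode c). \<exists>y<Suc c. lnth c i = ev e (lcons x 0) y))"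

lemma H_mono: "H t e x \<Longrightarrow> t \<le> t' \<Longrightarrow> H t' e x"
  unfolding H_def by (meson le_imp_less_Suc less_Suc_eq_le order_trans)

lemma lcons_x0: "lcons x 0 = list_encode [x]" by (simp add: lcons_def)

lemma W_H: "x \<in> W e \<longleftrightarrow> (\<exists>t. H t e x)"
proof
  assume "x \<in> W e"
  then obtain f y where f: "code f = e" "eval f [x] y" unfolding W_def by blast
  from eval_complete[OF f(2)] obtain L where L: "validL L" "ev e (list_encode [x]) y \<in> set L" using f(1) by blast
  let ?c = "list_encode L"
  obtain i where i: "i < length L" "L ! i = ev e (list_encode [x]) y" using L(2) by (auto simp: in_set_conv_nth)
  have "y \<le> ev e (list_encode [x]) y" by (rule ev_ge2)
  also have "\<dots> \<le> ?c" using mem_le[of _ ?c] L(2) by simp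
  finally have "y < Suc ?c" by simp
  moreover have "validC ?c" using L(1) validC_iff by simp
  moreover have "lnth ?c i = ev e (lcons x 0) y" using i by (simp add: lnth_eq lcons_x0)
  ultimately have "\<exists>i<length (list_decode ?c). \<exists>y<Suc ?c. lnth ?c i = ev e (lcons x 0) y"
    using i(1) by auto
  then have "H ?c e x" unfolding H_def using \<open>validC ?c\<close> by blast
  then show "\<exists>t. H t e x" by blast
next
  assume "\<exists>t. H t e x"
  then obtain c i y where c: "validC c" "i < length (list_decode c)" "lnth c i = ev e (lcons x 0) y"
    unfolding H_def by blast
  have "sem (list_decode c ! i)" using validL_sound c(1,2) validC_iff by blast
  then have "sem (ev e (lcons x 0) y)" using c(2,3) lnth_eq by simp
  from sem_ev[OF this] obtain f where "code f = e" "eval f [x] y" by (auto simp: lcons_x0)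
  then show "x \<in> W e" unfolding W_def by blast
qed

lemma composeP1: "compP (Suc 0) (\<lambda>ys. P (ys ! 0)) \<Longrightarrow> cmp k F \<Longrightarrow> compP k (\<lambda>xs. P (F xs))"
  unfolding compP_def by (rule compose1[where g = "\<lambda>a. ind (P a)"])

lemma compP_validC[ci]: "cmp k F \<Longrightarrow> compP k (\<lambda>xs. validC (F xs))"
  by (rule composeP1) (unfold validC_def, intro ci; simp)

lemma compP_H[ci]: "cmp k F \<Longrightarrow> cmp k G \<Longrightarrow> cmp k K \<Longrightarrow> compP k (\<lambda>xs. H (F xs) (G xs) (K xs))"
  by (rule composeP3) (unfold H_def, intro ci; simp)


lemma ideal_succ: "is_ideal R I \<Longrightarrow> a \<in> I \<Longrightarrow> \<exists>c\<in>I. R a c"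
  unfolding is_ideal_def by blast

lemma ideal_lower: "is_ideal R I \<Longrightarrow> a \<in> I \<Longrightarrow> R b a \<Longrightarrow> b \<in> I"
  unfolding is_ideal_def by blast

lemma ideal_dir: "is_ideal R I \<Longrightarrow> a \<in> I \<Longrightarrow> b \<in> I \<Longrightarrow> \<exists>c\<in>I. R a c \<and> R b c"
  unfolding is_ideal_def by blast

lemma ideal_fin_dir:
  assumes I: "is_ideal R I" and tr: "trans_rel R" and F: "finite F" "F \<subseteq> I"
  shows "\<exists>c\<in>I. \<forall>y\<in>F. R y c"
  using F
proof (induction F rule: finite_induct)
  case empty
  from I obtain a where "a \<in> I" unfolding is_ideal_def by blast
  then show ?case by blast
next
  case (insert x F)
  then obtain c where c: "c \<in> I" "\<forall>y\<in>F. R y c" by blast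
  from ideal_dir[OF I _ c(1), of x] insert.prems obtain d where d: "d \<in> I" "R x d" "R c d" by blast
  have "\<forall>y\<in>insert x F. R y d" using c(2) d tr unfolding trans_rel_def by blast
  with d(1) show ?case by blast
qed

lemma finite_mono_ex:
  assumes "finite F" "\<forall>y\<in>F. \<exists>t::nat. P y t" "\<And>y t t'. P y t \<Longrightarrow> t \<le> t' \<Longrightarrow> P y t'"
  shows "\<exists>T. \<forall>y\<in>F. P y T"
  using assms(1,2)
proof (induction F rule: finite_induct)
  case empty then show ?case by simp
next
  case (insert x F)
  then obtain T where T: "\<forall>y\<in>F. P y T" by blast
  from insert.prems obtain t where t: "P x t" by blast
  have "\<forall>y\<in>insert x F. P y (max T t)" using T t assms(3) by (metis insert_iff max.cobounded1 max.cobounded2)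
  then show ?case by blast
qed

abbreviation nd :: "nat \<Rightarrow> nat" where "nd z \<equiv> pf (ps z)"
abbreviation stg :: "nat \<Rightarrow> nat" where "stg z \<equiv> pf (ps (ps z))"
abbreviation Kset :: "nat \<Rightarrow> nat set" where "Kset z \<equiv> set (list_decode (ps (ps (ps z))))"
abbreviation sx :: "nat \<Rightarrow> nat" where "sx z \<equiv> ps (ps z)"

definition el0 :: "nat \<Rightarrow> nat \<Rightarrow> nat \<Rightarrow> nat" where "el0 n s k = prod_encode (0, prod_encode (n, prod_encode (s, k)))"
definition el1 :: "nat \<Rightarrow> nat \<Rightarrow> nat" where "el1 n x = prod_encode (1, prod_encode (n, x))"

lemma el0_simps[simp]: "pf (el0 n s k) = 0" "nd (el0 n s k) = n" "stg (el0 n s k) = s" "ps (ps (ps (el0 n s k))) = k"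
  by (simp_all add: el0_def)
lemma el1_simps[simp]: "pf (el1 n x) = 1" "nd (el1 n x) = n" "sx (el1 n x) = x"
  by (simp_all add: el1_def)

locale setting =
  fixes R :: "nat \<Rightarrow> nat \<Rightarrow> bool" and U :: "nat set"
    and E :: "nat \<Rightarrow> nat \<Rightarrow> nat \<Rightarrow> bool" and Ut :: "nat \<Rightarrow> nat \<Rightarrow> bool"
  assumes tr: "trans_rel R"
    and E_R: "E t x y \<Longrightarrow> R x y"
    and R_E: "R x y \<Longrightarrow> \<exists>t. E t x y"
    and E_mono: "E t x y \<Longrightarrow> t \<le> t' \<Longrightarrow> E t' x y"
    and E_fin: "finite {(x, y). E t x y}"
    and Ut_U: "Ut t x \<Longrightarrow> x \<in> U"
    and U_Ut: "x \<in> U \<Longrightarrow> \<exists>t. Ut t x"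
    and Ut_mono: "Ut t x \<Longrightarrow> t \<le> t' \<Longrightarrow> Ut t' x"
begin

lemma trR: "R a b \<Longrightarrow> R b c \<Longrightarrow> R a c"
  using tr unfolding trans_rel_def by blast

definition closedE :: "nat \<Rightarrow> nat \<Rightarrow> nat set \<Rightarrow> bool" where
  "closedE m t L \<longleftrightarrow> (\<forall>x y. E t x y \<and> (y \<in> L \<or> y = m) \<longrightarrow> x \<in> L)"
definition avoidU :: "nat \<Rightarrow> nat \<Rightarrow> nat set \<Rightarrow> bool" where
  "avoidU m t L \<longleftrightarrow> \<not> Ut t m \<and> (\<forall>y\<in>L. \<not> Ut t y)"
definition valid0 :: "nat \<Rightarrow> nat \<Rightarrow> nat set \<Rightarrow> bool" where
  "valid0 m t L \<longleftrightarrow> (\<forall>y\<in>L. R y m) \<and> closedE m t L \<and> avoidU m t L"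

definition Rel :: "nat \<Rightarrow> nat \<Rightarrow> bool" where
  "Rel z1 z2 \<longleftrightarrow> (pf z1 = 0 \<and> pf z2 = 0 \<and> stg z1 < stg z2 \<and> nd z1 \<in> Kset z2 \<and> Kset z1 \<subseteq> Kset z2 \<and>
        valid0 (nd z2) (stg z2) (Kset z2)) \<or>
     (pf z1 = 1 \<and> pf z2 = 1 \<and> R (nd z1) (nd z2) \<and> sx z1 \<in> U \<and> R (sx z1) (nd z1) \<and> sx z2 \<in> U \<and> R (sx z2) (nd z2))"

lemma trans_Rel: "trans_rel Rel"
  unfolding trans_rel_def Rel_def using trR by auto

lemma trRel: "Rel a b \<Longrightarrow> Rel b c \<Longrightarrow> Rel a c"
  using trans_Rel unfolding trans_rel_def by blast

lemma Rel_tag: "Rel z1 z2 \<Longrightarrow> pf z1 = pf z2"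
  unfolding Rel_def by auto

lemma ideal_tag:
  assumes J: "is_ideal Rel J"
  shows "(\<forall>z\<in>J. pf z = 0) \<or> (\<forall>z\<in>J. pf z = 1)"
proof -
  have t: "pf z = 0 \<or> pf z = 1" if "z \<in> J" for z
    using ideal_succ[OF J that] unfolding Rel_def by auto
  have s: "pf z1 = pf z2" if "z1 \<in> J" "z2 \<in> J" for z1 z2
    using ideal_dir[OF J that] Rel_tag by metis
  show ?thesis
  proof (cases "\<exists>z\<in>J. pf z = 0")
    case True then obtain z0 where "z0 \<in> J" "pf z0 = 0" by blast
    then show ?thesis using s by metis
  next
    case False then show ?thesis using t by blast
  qed
qed

definition f :: "nat set \<Rightarrow> nat set" where
  "f J = {k. \<exists>z\<in>J. R k (nd z)}"

definition A :: "nat set set" where "A = avoid_set R U"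

definition J0 :: "nat set \<Rightarrow> nat set" where
  "J0 I = {z. pf z = 0 \<and> nd z \<in> I \<and> Kset z \<subseteq> I}"
definition J1 :: "nat set \<Rightarrow> nat set" where
  "J1 I = {z. pf z = 1 \<and> nd z \<in> I \<and> sx z \<in> U \<and> R (sx z) (nd z)}"
definition g :: "nat set \<Rightarrow> nat set" where
  "g I = (if (\<forall>x\<in>U. x \<notin> I) then J0 I else J1 I)"

lemma high:
  assumes J: "is_ideal Rel J" and t0: "\<forall>z\<in>J. pf z = 0" and z: "z \<in> J"
  shows "\<exists>z'\<in>J. Rel z z' \<and> T \<le> stg z'"
proof (induction T)
  case 0 then show ?case using ideal_succ[OF J z] by auto
next
  case (Suc T)
  then obtain z' where z': "z' \<in> J" "Rel z z'" "T \<le> stg z'" by blast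
  from ideal_succ[OF J z'(1)] obtain z'' where z'': "z'' \<in> J" "Rel z' z''" by blast
  have "stg z' < stg z''" using z''(2) t0 z'(1) unfolding Rel_def by auto
  then show ?case using z' z'' trRel by (metis Suc_le_eq le_less_trans)
qed

lemma Rel0_nd: "Rel z z' \<Longrightarrow> pf z = 0 \<Longrightarrow> R (nd z) (nd z')"
  unfolding Rel_def valid0_def by auto
lemma Rel1_nd: "Rel z z' \<Longrightarrow> pf z = 1 \<Longrightarrow> R (nd z) (nd z')"
  unfolding Rel_def by auto
lemma Rel_nd: "Rel z z' \<Longrightarrow> R (nd z) (nd z')"
  unfolding Rel_def valid0_def by auto

lemma f_ideal:
  assumes J: "is_ideal Rel J"
  shows "is_ideal R (f J)"
  unfolding is_ideal_def
proof (intro conjI ballI allI impI)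
  from J obtain z where z: "z \<in> J" unfolding is_ideal_def by blast
  from ideal_succ[OF J z] obtain z' where "z' \<in> J" "Rel z z'" by blast
  then show "f J \<noteq> {}" unfolding f_def using Rel_nd by blast
next
  fix a b assume "a \<in> f J" "R b a"
  then show "b \<in> f J" unfolding f_def using trR by blast
next
  fix a b assume "a \<in> f J" "b \<in> f J"
  then obtain z1 z2 where z: "z1 \<in> J" "R a (nd z1)" "z2 \<in> J" "R b (nd z2)" unfolding f_def by blast
  from ideal_dir[OF J z(1,3)] obtain c where c: "c \<in> J" "Rel z1 c" "Rel z2 c" by blast
  from ideal_succ[OF J c(1)] obtain c' where c': "c' \<in> J" "Rel c c'" by blast
  have "R a (nd c)" "R b (nd c)" using z c Rel_nd trR by blast+
  moreover have "nd c \<in> f J" unfolding f_def using c' Rel_nd by blast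
  ultimately show "\<exists>c\<in>f J. R a c \<and> R b c" by blast
qed

lemma f_tag0_A:
  assumes J: "is_ideal Rel J" and t0: "\<forall>z\<in>J. pf z = 0"
  shows "\<forall>x\<in>U. x \<notin> f J"
proof (intro ballI notI)
  fix x assume x: "x \<in> U" "x \<in> f J"
  then obtain z where z: "z \<in> J" "R x (nd z)" unfolding f_def by blast
  obtain t1 where t1: "E t1 x (nd z)" using R_E[OF z(2)] by blast
  obtain t2 where t2: "Ut t2 x" using U_Ut[OF x(1)] by blast
  obtain z' where z': "z' \<in> J" "Rel z z'" "max t1 t2 \<le> stg z'" using high[OF J t0 z(1)] by blast
  have v: "nd z \<in> Kset z'" "valid0 (nd z') (stg z') (Kset z')" using z'(2) t0 z(1) unfolding Rel_def by auto
  have "E (stg z') x (nd z)" using E_mono[OF t1] z'(3) by simp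
  then have "x \<in> Kset z'" using v unfolding valid0_def closedE_def by blast
  moreover have "Ut (stg z') x" using Ut_mono[OF t2] z'(3) by simp
  ultimately show False using v unfolding valid0_def avoidU_def by blast
qed

lemma f_tag1_notA:
  assumes J: "is_ideal Rel J" and t1: "\<forall>z\<in>J. pf z = 1"
  shows "\<exists>x\<in>U. x \<in> f J"
proof -
  from J obtain z where z: "z \<in> J" unfolding is_ideal_def by blast
  from ideal_succ[OF J z] obtain z' where "Rel z z'" by blast
  then have "sx z \<in> U" "R (sx z) (nd z)" using t1 z unfolding Rel_def by auto
  then show ?thesis unfolding f_def using z by blast
qed

lemma gf_tag0:
  assumes J: "is_ideal Rel J" and t0: "\<forall>z\<in>J. pf z = 0"
  shows "J0 (f J) = J"
proof
  show "J \<subseteq> J0 (f J)"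
  proof
    fix z assume z: "z \<in> J"
    from ideal_succ[OF J z] obtain z' where z': "z' \<in> J" "Rel z z'" by blast
    have v: "nd z \<in> Kset z'" "Kset z \<subseteq> Kset z'" "\<forall>y\<in>Kset z'. R y (nd z')"
      using z'(2) t0 z unfolding Rel_def valid0_def by auto
    have "nd z \<in> f J" "Kset z \<subseteq> f J" unfolding f_def using v z'(1) by blast+
    then show "z \<in> J0 (f J)" unfolding J0_def using t0 z by blast
  qed
next
  show "J0 (f J) \<subseteq> J"
  proof
    fix z assume z: "z \<in> J0 (f J)"
    let ?F = "insert (nd z) (Kset z)"
    have F: "finite ?F" "?F \<subseteq> f J" using z unfolding J0_def by auto
    have "\<forall>y\<in>?F. \<exists>w. w \<in> J \<and> R y (nd w)" using F(2) unfolding f_def by blast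
    then obtain w where w: "\<forall>y\<in>?F. w y \<in> J \<and> R y (nd (w y))" by metis
    have "finite (w ` ?F)" "w ` ?F \<subseteq> J" using F w by auto
    from ideal_fin_dir[OF J trans_Rel this] obtain d where d: "d \<in> J" "\<forall>v\<in>w ` ?F. Rel v d" by blast
    have "\<forall>y\<in>?F. \<exists>t. E t y (nd (w y))" using w R_E by blast
    from finite_mono_ex[OF F(1) this] E_mono obtain T where T: "\<forall>y\<in>?F. E T y (nd (w y))" by metis
    obtain d' where d': "d' \<in> J" "Rel d d'" "max T (Suc (stg z)) \<le> stg d'" using high[OF J t0 d(1)] by blast
    have Kd: "Kset d \<subseteq> Kset d'" "valid0 (nd d') (stg d') (Kset d')" using d'(2) t0 d(1) unfolding Rel_def by auto
    have "nd (w y) \<in> Kset d'" if "y \<in> ?F" for y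
    proof -
      have "Rel (w y) d" using d(2) that by blast
      then have "nd (w y) \<in> Kset d" using t0 w that unfolding Rel_def by auto
      then show ?thesis using Kd by blast
    qed
    moreover have "E (stg d') y (nd (w y))" if "y \<in> ?F" for y using T that E_mono d'(3) by fastforce
    ultimately have inK: "y \<in> Kset d'" if "y \<in> ?F" for y
      using Kd(2) that unfolding valid0_def closedE_def by blast
    have "Rel z d'"
      unfolding Rel_def using z t0 d'(1) d'(3) inK Kd(2) unfolding J0_def by auto
    then show "z \<in> J" using ideal_lower[OF J d'(1)] by blast
  qed
qed

lemma gf_tag1:
  assumes J: "is_ideal Rel J" and t1: "\<forall>z\<in>J. pf z = 1"
  shows "J1 (f J) = J"
proof
  show "J \<subseteq> J1 (f J)"
  proof
    fix z assume z: "z \<in> J"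
    from ideal_succ[OF J z] obtain z' where z': "z' \<in> J" "Rel z z'" by blast
    then have "sx z \<in> U" "R (sx z) (nd z)" "R (nd z) (nd z')" using t1 z unfolding Rel_def by auto
    then show "z \<in> J1 (f J)" unfolding J1_def f_def using z' t1 z by blast
  qed
next
  show "J1 (f J) \<subseteq> J"
  proof
    fix z assume z: "z \<in> J1 (f J)"
    then obtain w where w: "w \<in> J" "R (nd z) (nd w)" unfolding J1_def f_def by blast
    from ideal_succ[OF J w(1)] obtain w' where "Rel w w'" by blast
    then have "sx w \<in> U" "R (sx w) (nd w)" using t1 w unfolding Rel_def by auto
    then have "Rel z w" using z w t1 unfolding Rel_def J1_def by auto
    then show "z \<in> J" using ideal_lower[OF J w(1)] by blast
  qed
qed

lemma gf: "is_ideal Rel J \<Longrightarrow> g (f J) = J"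
  using ideal_tag[of J] f_tag0_A f_tag1_notA gf_tag0 gf_tag1 unfolding g_def by metis

lemma J0_ideal:
  assumes I: "is_ideal R I" and A: "\<forall>x\<in>U. x \<notin> I"
  shows "is_ideal Rel (J0 I)"
  unfolding is_ideal_def
proof (intro conjI ballI allI impI)
  from I obtain n where "n \<in> I" unfolding is_ideal_def by blast
  then have "el0 n 0 0 \<in> J0 I" unfolding J0_def by simp
  then show "J0 I \<noteq> {}" by blast
next
  fix a b assume a: "a \<in> J0 I" and r: "Rel b a"
  then have "pf a = 0" unfolding J0_def by blast
  then have "pf b = 0" "nd b \<in> Kset a" "Kset b \<subseteq> Kset a" "\<forall>y\<in>Kset a. R y (nd a)"
    using r unfolding Rel_def valid0_def by auto
  moreover have "\<forall>y\<in>Kset a. y \<in> I" using calculation(4) a ideal_lower[OF I] unfolding J0_def by blast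
  ultimately show "b \<in> J0 I" unfolding J0_def by blast
next
  fix z1 z2 assume z: "z1 \<in> J0 I" "z2 \<in> J0 I"
  let ?F = "{nd z1, nd z2} \<union> Kset z1 \<union> Kset z2"
  have F: "finite ?F" "?F \<subseteq> I" using z unfolding J0_def by auto
  from ideal_fin_dir[OF I tr F] obtain c where c: "c \<in> I" "\<forall>y\<in>?F. R y c" by blast
  define r where "r = Suc (max (stg z1) (stg z2))"
  let ?E = "\<lambda>x y. E r x y"
  define M where "M = ?F \<union> {x. \<exists>y\<in>insert c ?F. ?E\<^sup>+\<^sup>+ x y}"
  have finE: "finite {(x, y). ?E x y}" by (rule E_fin)
  have "{(x, y). ?E\<^sup>+\<^sup>+ x y} = {(x, y). ?E x y}\<^sup>+" by (simp add: tranclp_unfold)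
  then have fin2: "finite {(x, y). ?E\<^sup>+\<^sup>+ x y}" using finE by (simp add: finite_trancl)
  have "{x. \<exists>y\<in>insert c ?F. ?E\<^sup>+\<^sup>+ x y} \<subseteq> fst ` {(x, y). ?E\<^sup>+\<^sup>+ x y}" by force
  then have "finite M" unfolding M_def using F(1) fin2 finite_subset by blast
  define k where "k = list_encode (sorted_list_of_set M)"
  have Kk: "set (list_decode k) = M" unfolding k_def using \<open>finite M\<close> by simp
  let ?z = "el0 c r k"
  have plusR: "R x y" if "?E\<^sup>+\<^sup>+ x y" for x y
    using that by (induction rule: tranclp_induct) (auto intro: E_R trR)
  have MR: "\<forall>y\<in>M. R y c"
  proof
    fix y assume "y \<in> M"
    then consider "y \<in> ?F" | y' where "y' \<in> insert c ?F" "?E\<^sup>+\<^sup>+ y y'" unfolding M_def by blast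
    then show "R y c"
    proof cases
      case 1 then show ?thesis using c by blast
    next
      case (2 y') then show ?thesis using plusR c trR by blast
    qed
  qed
  have MI: "M \<subseteq> I" using MR c(1) ideal_lower[OF I] by blast
  have closed: "closedE c r M"
    unfolding closedE_def
  proof (intro allI impI)
    fix x y assume xy: "E r x y \<and> (y \<in> M \<or> y = c)"
    then consider "y = c" | "y \<in> ?F" | y' where "y' \<in> insert c ?F" "?E\<^sup>+\<^sup>+ y y'" unfolding M_def by blast
    then show "x \<in> M"
    proof cases
      case 1 then show ?thesis using xy unfolding M_def by blast
    next
      case 2 then show ?thesis using xy unfolding M_def by blast
    next
      case (3 y')
      then have "?E\<^sup>+\<^sup>+ x y'" using xy by (meson tranclp.r_into_trancl tranclp_trans)
      then show ?thesis using 3 unfolding M_def by blast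
    qed
  qed
  have avoid: "avoidU c r M" unfolding avoidU_def using A MI c(1) Ut_U by blast
  have valid: "valid0 c r M" unfolding valid0_def using MR closed avoid by blast
  have zJ: "?z \<in> J0 I" unfolding J0_def using c(1) MI Kk by simp
  have "Rel z1 ?z" "Rel z2 ?z" unfolding Rel_def using z Kk valid unfolding J0_def M_def r_def by auto
  then show "\<exists>c\<in>J0 I. Rel z1 c \<and> Rel z2 c" using zJ by blast
qed

lemma J1_ideal:
  assumes I: "is_ideal R I" and A: "\<exists>x\<in>U. x \<in> I"
  shows "is_ideal Rel (J1 I)"
  unfolding is_ideal_def
proof (intro conjI ballI allI impI)
  from A obtain x0 where x0: "x0 \<in> U" "x0 \<in> I" by blast
  from ideal_succ[OF I x0(2)] obtain c where "c \<in> I" "R x0 c" by blast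
  then have "el1 c x0 \<in> J1 I" unfolding J1_def using x0 by simp
  then show "J1 I \<noteq> {}" by blast
next
  fix a b assume a: "a \<in> J1 I" and r: "Rel b a"
  then have "pf a = 1" unfolding J1_def by blast
  then have "pf b = 1" "R (nd b) (nd a)" "sx b \<in> U" "R (sx b) (nd b)" using r unfolding Rel_def by auto
  moreover have "nd b \<in> I" using calculation(2) a ideal_lower[OF I] unfolding J1_def by blast
  ultimately show "b \<in> J1 I" unfolding J1_def by blast
next
  fix z1 z2 assume z: "z1 \<in> J1 I" "z2 \<in> J1 I"
  then have nI: "nd z1 \<in> I" "nd z2 \<in> I" unfolding J1_def by auto
  from ideal_dir[OF I nI] obtain c where c: "c \<in> I" "R (nd z1) c" "R (nd z2) c" by blast
  let ?z = "el1 c (sx z1)"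
  have zJ: "?z \<in> J1 I" using z c trR unfolding J1_def by auto
  have "Rel z1 ?z" "Rel z2 ?z" using z c trR unfolding Rel_def J1_def by auto
  then show "\<exists>c\<in>J1 I. Rel z1 c \<and> Rel z2 c" using zJ by blast
qed

lemma g_ideal: "is_ideal R I \<Longrightarrow> is_ideal Rel (g I)"
  unfolding g_def using J0_ideal J1_ideal by auto

lemma fg: assumes I: "is_ideal R I" shows "f (g I) = I"
proof
  show "f (g I) \<subseteq> I"
  proof
    fix k assume "k \<in> f (g I)"
    then obtain z where z: "z \<in> g I" "R k (nd z)" unfolding f_def by blast
    then have "nd z \<in> I" unfolding g_def J0_def J1_def by (auto split: if_splits)
    then show "k \<in> I" using z(2) ideal_lower[OF I] by blast
  qed
next
  show "I \<subseteq> f (g I)"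
  proof
    fix k assume k: "k \<in> I"
    show "k \<in> f (g I)"
    proof (cases "\<forall>x\<in>U. x \<notin> I")
      case True
      from ideal_succ[OF I k] obtain c where "c \<in> I" "R k c" by blast
      moreover have "el0 c 0 0 \<in> J0 I" using calculation unfolding J0_def by simp
      ultimately show ?thesis unfolding f_def g_def using True by (intro CollectI bexI[of _ "el0 c 0 0"]) auto
    next
      case False
      then obtain x0 where x0: "x0 \<in> U" "x0 \<in> I" by blast
      from ideal_dir[OF I k x0(2)] obtain c where c: "c \<in> I" "R k c" "R x0 c" by blast
      have "el1 c x0 \<in> J1 I" using c x0 unfolding J1_def by simp
      then show ?thesis unfolding f_def g_def using False c by (intro CollectI bexI[of _ "el1 c x0"]) auto
    qed
  qed
qed

end

context setting begin

definition Vf :: "nat set" where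
  "Vf = {w. R (pf w div 2) (nd (ps w)) \<and> (odd (pf w) \<longrightarrow> pf (ps w) = 0)}"
definition Vg :: "nat set" where
  "Vg = {w. (pf (pf w) = 0 \<and> odd (ps w) \<and> R (nd (pf w)) (ps w div 2) \<and> (\<forall>y\<in>Kset (pf w). R y (ps w div 2))) \<or>
            (pf (pf w) = 1 \<and> ps w = 2 * nd (pf w) \<and> sx (pf w) \<in> U \<and> R (sx (pf w)) (nd (pf w)))}"

lemma pre_f:
  assumes J: "is_ideal Rel J"
  shows "f J \<in> added_base R A n \<longleftrightarrow> (\<exists>m\<in>J. R (n div 2) (nd m) \<and> (odd n \<longrightarrow> pf m = 0))"
proof -
  have fI: "f J \<in> Ideals R" using f_ideal[OF J] by (simp add: Ideals_def)
  show ?thesis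
  proof (cases "even n")
    case True
    then show ?thesis using fI unfolding added_base_def ideal_base_def f_def by auto
  next
    case False
    have "(\<forall>x\<in>U. x \<notin> f J) \<and> n div 2 \<in> f J \<longleftrightarrow> (\<exists>m\<in>J. R (n div 2) (nd m) \<and> pf m = 0)"
    proof
      assume a: "(\<forall>x\<in>U. x \<notin> f J) \<and> n div 2 \<in> f J"
      then obtain m where m: "m \<in> J" "R (n div 2) (nd m)" unfolding f_def by blast
      have "\<not> (\<forall>z\<in>J. pf z = 1)" using f_tag1_notA[OF J] a by blast
      then have "\<forall>z\<in>J. pf z = 0" using ideal_tag[OF J] by blast
      then show "\<exists>m\<in>J. R (n div 2) (nd m) \<and> pf m = 0" using m by blast
    next
      assume "\<exists>m\<in>J. R (n div 2) (nd m) \<and> pf m = 0"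
      then obtain m where m: "m \<in> J" "R (n div 2) (nd m)" "pf m = 0" by blast
      then have "\<forall>z\<in>J. pf z = 0" using ideal_tag[OF J] by force
      then show "(\<forall>x\<in>U. x \<notin> f J) \<and> n div 2 \<in> f J" using f_tag0_A[OF J] m unfolding f_def by blast
    qed
    then show ?thesis using False fI unfolding added_base_def ideal_base_def A_def avoid_set_def by auto
  qed
qed

lemma pre_g:
  assumes I: "is_ideal R I"
  shows "m \<in> g I \<longleftrightarrow> (\<exists>i. prod_encode (m, i) \<in> Vg \<and> I \<in> added_base R A i)"
proof -
  have II: "I \<in> Ideals R" using I by (simp add: Ideals_def)
  consider "pf m = 0" | "pf m = 1" | "pf m \<noteq> 0" "pf m \<noteq> 1" by blast
  then show ?thesis
  proof cases
    case 1
    have "m \<in> g I \<longleftrightarrow> (\<forall>x\<in>U. x \<notin> I) \<and> nd m \<in> I \<and> Kset m \<subseteq> I"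
      using 1 unfolding g_def J0_def J1_def by auto
    also have "\<dots> \<longleftrightarrow> (\<exists>i. prod_encode (m, i) \<in> Vg \<and> I \<in> added_base R A i)"
    proof
      assume a: "(\<forall>x\<in>U. x \<notin> I) \<and> nd m \<in> I \<and> Kset m \<subseteq> I"
      have "finite (insert (nd m) (Kset m))" "insert (nd m) (Kset m) \<subseteq> I" using a by auto
      from ideal_fin_dir[OF I tr this] obtain c where c: "c \<in> I" "\<forall>y\<in>insert (nd m) (Kset m). R y c" by blast
      have "prod_encode (m, 2 * c + 1) \<in> Vg" using 1 c unfolding Vg_def by simp
      moreover have "I \<in> added_base R A (2 * c + 1)"
        using II a c unfolding added_base_def A_def avoid_set_def ideal_base_def by simp
      ultimately show "\<exists>i. prod_encode (m, i) \<in> Vg \<and> I \<in> added_base R A i" by blast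
    next
      assume "\<exists>i. prod_encode (m, i) \<in> Vg \<and> I \<in> added_base R A i"
      then obtain i where i: "prod_encode (m, i) \<in> Vg" "I \<in> added_base R A i" by blast
      then have io: "odd i" "R (nd m) (i div 2)" "\<forall>y\<in>Kset m. R y (i div 2)" using 1 unfolding Vg_def by auto
      then have "(\<forall>x\<in>U. x \<notin> I) \<and> i div 2 \<in> I" using i(2) unfolding added_base_def A_def avoid_set_def ideal_base_def by auto
      then show "(\<forall>x\<in>U. x \<notin> I) \<and> nd m \<in> I \<and> Kset m \<subseteq> I" using io ideal_lower[OF I] by blast
    qed
    finally show ?thesis .
  next
    case 2
    have "m \<in> g I \<longleftrightarrow> \<not> (\<forall>x\<in>U. x \<notin> I) \<and> nd m \<in> I \<and> sx m \<in> U \<and> R (sx m) (nd m)"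
      using 2 unfolding g_def J0_def J1_def by auto
    also have "\<dots> \<longleftrightarrow> nd m \<in> I \<and> sx m \<in> U \<and> R (sx m) (nd m)"
      using ideal_lower[OF I] by blast
    also have "\<dots> \<longleftrightarrow> (\<exists>i. prod_encode (m, i) \<in> Vg \<and> I \<in> added_base R A i)"
    proof
      assume a: "nd m \<in> I \<and> sx m \<in> U \<and> R (sx m) (nd m)"
      then have "prod_encode (m, 2 * nd m) \<in> Vg" "I \<in> added_base R A (2 * nd m)"
        using 2 II unfolding Vg_def added_base_def ideal_base_def by auto
      then show "\<exists>i. prod_encode (m, i) \<in> Vg \<and> I \<in> added_base R A i" by blast
    next
      assume "\<exists>i. prod_encode (m, i) \<in> Vg \<and> I \<in> added_base R A i"
      then obtain i where i: "prod_encode (m, i) \<in> Vg" "I \<in> added_base R A i" by blast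
      then have "i = 2 * nd m" "sx m \<in> U" "R (sx m) (nd m)" using 2 unfolding Vg_def by auto
      then show "nd m \<in> I \<and> sx m \<in> U \<and> R (sx m) (nd m)" using i(2) unfolding added_base_def ideal_base_def by auto
    qed
    finally show ?thesis .
  next
    case 3
    then show ?thesis unfolding g_def J0_def J1_def Vg_def by auto
  qed
qed

lemma homeo:
  assumes "ce Vf" "ce Vg"
  shows "computably_homeomorphic (Ideals Rel) (ideal_base Rel) (Ideals R) (added_base R A)"
  unfolding computably_homeomorphic_def
proof (intro exI conjI)
  show "computable_map (Ideals Rel) (ideal_base Rel) (Ideals R) (added_base R A) f"
    unfolding computable_map_def
  proof (intro conjI exI[of _ Vf])
    show "f ` Ideals Rel \<subseteq> Ideals R" using f_ideal by (auto simp: Ideals_def)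
    show "ce Vf" by fact
    show "\<forall>n. {x \<in> Ideals Rel. f x \<in> added_base R A n} = \<Union> {ideal_base Rel m |m. prod_encode (n, m) \<in> Vf}"
    proof (intro allI set_eqI iffI)
      fix n J assume "J \<in> {x \<in> Ideals Rel. f x \<in> added_base R A n}"
      then have J: "is_ideal Rel J" "f J \<in> added_base R A n" by (auto simp: Ideals_def)
      then obtain m where "m \<in> J" "R (n div 2) (nd m) \<and> (odd n \<longrightarrow> pf m = 0)" using pre_f by blast
      then show "J \<in> \<Union> {ideal_base Rel m |m. prod_encode (n, m) \<in> Vf}"
        using J unfolding Vf_def ideal_base_def Ideals_def by auto
    next
      fix n J assume "J \<in> \<Union> {ideal_base Rel m |m. prod_encode (n, m) \<in> Vf}"
      then obtain m where m: "prod_encode (n, m) \<in> Vf" "J \<in> ideal_base Rel m" by blast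
      then have J: "is_ideal Rel J" "m \<in> J" unfolding ideal_base_def Ideals_def by auto
      have "R (n div 2) (nd m) \<and> (odd n \<longrightarrow> pf m = 0)" using m(1) unfolding Vf_def by simp
      then have "f J \<in> added_base R A n" using pre_f[OF J(1)] J(2) by blast
      then show "J \<in> {x \<in> Ideals Rel. f x \<in> added_base R A n}" using J by (simp add: Ideals_def)
    qed
  qed
  show "computable_map (Ideals R) (added_base R A) (Ideals Rel) (ideal_base Rel) g"
    unfolding computable_map_def
  proof (intro conjI exI[of _ Vg])
    show "g ` Ideals R \<subseteq> Ideals Rel" using g_ideal by (auto simp: Ideals_def)
    show "ce Vg" by fact
    show "\<forall>n. {x \<in> Ideals R. g x \<in> ideal_base Rel n} = \<Union> {added_base R A m |m. prod_encode (n, m) \<in> Vg}"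
    proof (intro allI set_eqI iffI)
      fix n I assume "I \<in> {x \<in> Ideals R. g x \<in> ideal_base Rel n}"
      then have I: "is_ideal R I" "n \<in> g I" by (auto simp: Ideals_def ideal_base_def)
      then show "I \<in> \<Union> {added_base R A m |m. prod_encode (n, m) \<in> Vg}" using pre_g by blast
    next
      fix n I assume "I \<in> \<Union> {added_base R A m |m. prod_encode (n, m) \<in> Vg}"
      then obtain i where i: "prod_encode (n, i) \<in> Vg" "I \<in> added_base R A i" by blast
      then have I: "is_ideal R I" unfolding added_base_def ideal_base_def Ideals_def by (auto split: if_splits)
      then have "n \<in> g I" using pre_g i by blast
      then show "I \<in> {x \<in> Ideals R. g x \<in> ideal_base Rel n}" using I g_ideal[OF I]
        by (simp add: Ideals_def ideal_base_def)
    qed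
  qed
  show "\<forall>x\<in>Ideals Rel. g (f x) = x" using gf by (simp add: Ideals_def)
  show "\<forall>y\<in>Ideals R. f (g y) = y" using fg by (simp add: Ideals_def)
qed

end


lemma div2_least: "(x::nat) div 2 = (LEAST q. x < 2 * q + 2)"
  by (rule Least_equality[symmetric]; presburger)

lemma cmp_div2_0: "cmp (Suc 0) (\<lambda>ys. ys ! 0 div 2)"
proof -
  have "cmp (Suc 0) (\<lambda>xs. LEAST q. xs ! 0 < 2 * q + 2)"
  proof (rule comp_least)
    show "compP (Suc (Suc 0)) (\<lambda>ys. tl ys ! 0 < 2 * ys ! 0 + 2)" by (intro ci; simp)
  next
    fix xs :: "nat list" show "\<exists>n. xs ! 0 < 2 * n + 2" by (intro exI[of _ "xs ! 0"]) simp
  qed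
  moreover have "(\<lambda>ys. ys ! 0 div 2) = (\<lambda>xs::nat list. LEAST q. xs ! 0 < 2 * q + 2)"
    by (rule ext) (rule div2_least)
  ultimately show ?thesis by simp
qed

lemma cmp_div2[ci]: "cmp k F \<Longrightarrow> cmp k (\<lambda>xs. F xs div 2)"
  by (rule compose1[OF cmp_div2_0])

lemma compP_odd[ci]: "cmp k F \<Longrightarrow> compP k (\<lambda>xs. odd (F xs))"
proof -
  assume "cmp k F"
  then have "compP k (\<lambda>xs. \<not> (F xs = 2 * (F xs div 2)))" by (intro ci)
  moreover have "(\<lambda>xs. \<not> (F xs = 2 * (F xs div 2))) = (\<lambda>xs. odd (F xs))" by (rule ext) presburger
  ultimately show ?thesis by simp
qed

definition memC :: "nat \<Rightarrow> nat \<Rightarrow> bool" where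
  "memC k y \<longleftrightarrow> (\<exists>j<length (list_decode k). lnth k j = y)"

lemma memC_iff: "memC k y \<longleftrightarrow> y \<in> set (list_decode k)"
  unfolding memC_def in_set_conv_nth using lnth_eq by auto

lemma composeP2: "compP (Suc (Suc 0)) (\<lambda>ys. P (ys ! 0) (ys ! 1)) \<Longrightarrow> cmp k F \<Longrightarrow> cmp k G \<Longrightarrow>
  compP k (\<lambda>xs. P (F xs) (G xs))"
  unfolding compP_def by (rule compose2[where g = "\<lambda>a b. ind (P a b)"])

lemma compP_memC[ci]: "cmp k F \<Longrightarrow> cmp k G \<Longrightarrow> compP k (\<lambda>xs. memC (F xs) (G xs))"
  by (rule composeP2) (unfold memC_def, intro ci; simp)

lemma mn_dom:
  assumes f: "\<forall>ys. length ys = Suc k \<longrightarrow> eval f ys (G ys)" and l: "length xs = k"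
  shows "(\<exists>y. eval (Mn f) xs y) \<longleftrightarrow> (\<exists>n. G (n # xs) = 0)"
proof
  assume "\<exists>y. eval (Mn f) xs y"
  then obtain y where "eval (Mn f) xs y" by blast
  then have "eval f (y # xs) 0" by (cases rule: eval.cases) auto
  moreover have "eval f (y # xs) (G (y # xs))" using f l by simp
  ultimately have "G (y # xs) = 0" using eval_det by blast
  then show "\<exists>n. G (n # xs) = 0" by blast
next
  assume "\<exists>n. G (n # xs) = 0"
  define n where "n = (LEAST n. G (n # xs) = 0)"
  have "G (n # xs) = 0" unfolding n_def by (rule LeastI_ex) fact
  then have "eval f (n # xs) 0" using f l by (metis length_Cons)
  moreover have "\<forall>m<n. \<exists>y. eval f (m # xs) (Suc y)"
  proof (intro allI impI)
    fix m assume "m < n"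
    then have "G (m # xs) \<noteq> 0" unfolding n_def using not_less_Least by blast
    then obtain y where "G (m # xs) = Suc y" using not0_implies_Suc by blast
    then show "\<exists>y. eval f (m # xs) (Suc y)" using f l by (metis length_Cons)
  qed
  ultimately have "eval (Mn f) xs n" by (rule eval_Mn)
  then show "\<exists>y. eval (Mn f) xs y" by blast
qed

lemma W_code: "W (code P) = {x. \<exists>y. eval P [x] y}"
  unfolding W_def using code_inj by blast

lemma ce_ex:
  assumes "compP (Suc (Suc 0)) (\<lambda>ys. Q (ys ! 0) (ys ! 1))"
  shows "ce {w. \<exists>t. Q t w}"
proof -
  have "cmp (Suc (Suc 0)) (\<lambda>ys. 1 - ind (Q (ys ! 0) (ys ! 1)))" using assms unfolding compP_def by (intro ci)
  then obtain f where f: "\<forall>ys. length ys = Suc (Suc 0) \<longrightarrow> eval f ys (1 - ind (Q (ys ! 0) (ys ! 1)))"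
    unfolding cmp_def by blast
  have "W (code (Mn f)) = {w. \<exists>t. Q t w}"
  proof -
    have "(\<exists>y. eval (Mn f) [w] y) \<longleftrightarrow> (\<exists>t. Q t w)" for w
      using mn_dom[OF f, of "[w]"] by (simp add: ind_def)
    then show ?thesis unfolding W_code by blast
  qed
  then show ?thesis unfolding ce_def by metis
qed

primrec kprog :: "nat \<Rightarrow> recf" where
  "kprog 0 = Z"
| "kprog (Suc a) = Cn S [kprog a]"

lemma eval_kprog: "eval (kprog a) xs a"
proof (induction a)
  case 0 then show ?case by (simp add: eval_Z)
next
  case (Suc a)
  have "list_all2 (\<lambda>g y. eval g xs y) [kprog a] [a]" using Suc by simp
  moreover have "eval S [a] (Suc a)" by (rule eval_S)
  ultimately have "eval (Cn S [kprog a]) xs (Suc a)" by (rule eval_Cn)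
  then show ?case by simp
qed

definition kstep :: "nat \<Rightarrow> nat" where
  "kstep c = prod_encode (3, prod_encode (prod_encode (1, 0), Suc (prod_encode (c, 0))))"

lemma code_kprog: "code (kprog a) = (kstep ^^ a) (prod_encode (0, 0))"
  by (induction a) (simp_all add: kstep_def)

lemma cmp_kstep0: "cmp (Suc 0) (\<lambda>ys. kstep (ys ! 0))"
  unfolding kstep_def by (intro ci; simp)

lemma cmp_kc[ci]: "cmp k F \<Longrightarrow> cmp k (\<lambda>xs. code (kprog (F xs)))"
  unfolding code_kprog by (intro comp_iter[OF cmp_kstep0] ci)

definition Ea :: "nat \<Rightarrow> nat \<Rightarrow> nat \<Rightarrow> nat \<Rightarrow> bool" where
  "Ea a t x y \<longleftrightarrow> prod_encode (x, y) \<le> t \<and> H t a (prod_encode (x, y))"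
definition Uu :: "nat \<Rightarrow> nat \<Rightarrow> nat \<Rightarrow> bool" where
  "Uu u t x \<longleftrightarrow> x \<le> t \<and> H t u x"

lemma W_H_le: "x \<in> W e \<longleftrightarrow> (\<exists>t. x \<le> t \<and> H t e x)"
proof
  assume "x \<in> W e"
  then obtain t where "H t e x" using W_H by blast
  then have "H (max t x) e x" using H_mono by simp
  then show "\<exists>t. x \<le> t \<and> H t e x" by (intro exI[of _ "max t x"]) simp
next
  assume "\<exists>t. x \<le> t \<and> H t e x"
  then show "x \<in> W e" using W_H by blast
qed

lemma setting_inst:
  assumes "trans_rel (ce_rel a)"
  shows "setting (ce_rel a) (W u) (Ea a) (Uu u)"
proof
  show "trans_rel (ce_rel a)" by fact
  show "ce_rel a x y" if "Ea a t x y" for t x y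
    using that W_H unfolding Ea_def ce_rel_def by blast
  show "\<exists>t. Ea a t x y" if "ce_rel a x y" for x y
    using that W_H_le unfolding Ea_def ce_rel_def by blast
  show "Ea a t' x y" if "Ea a t x y" "t \<le> t'" for t t' x y
    using that H_mono unfolding Ea_def by auto
  show "finite {(x, y). Ea a t x y}" for t
  proof (rule finite_subset)
    show "{(x, y). Ea a t x y} \<subseteq> {..t} \<times> {..t}"
    proof (clarify)
      fix x y assume "Ea a t x y"
      then have "prod_encode (x, y) \<le> t" unfolding Ea_def by blast
      then show "x \<in> {..t} \<and> y \<in> {..t}" using le_prod_encode_1[of x y] le_prod_encode_2[of y x] by simp
    qed
  qed simp
  show "x \<in> W u" if "Uu u t x" for t x using that W_H unfolding Uu_def by blast
  show "\<exists>t. Uu u t x" if "x \<in> W u" for x using that W_H_le unfolding Uu_def by blast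
  show "Uu u t' x" if "Uu u t x" "t \<le> t'" for t t' x using that H_mono unfolding Uu_def by auto
qed


definition closedC :: "nat \<Rightarrow> nat \<Rightarrow> nat \<Rightarrow> nat \<Rightarrow> bool" where
  "closedC a m s k \<longleftrightarrow> (\<forall>p<Suc s. H s a p \<and> (memC k (ps p) \<or> ps p = m) \<longrightarrow> memC k (pf p))"
definition avoidC :: "nat \<Rightarrow> nat \<Rightarrow> nat \<Rightarrow> nat \<Rightarrow> bool" where
  "avoidC u m s k \<longleftrightarrow> \<not> (m \<le> s \<and> H s u m) \<and> (\<forall>j<length (list_decode k). \<not> (lnth k j \<le> s \<and> H s u (lnth k j)))"

definition Dp :: "nat \<Rightarrow> nat \<Rightarrow> nat \<Rightarrow> nat \<Rightarrow> bool" where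
  "Dp a u t w \<longleftrightarrow>
   (pf (pf w) = 0 \<and> pf (ps w) = 0 \<and> stg (pf w) < stg (ps w) \<and> memC (ps (ps (ps (ps w)))) (nd (pf w)) \<and>
     (\<forall>j<length (list_decode (ps (ps (ps (pf w))))). memC (ps (ps (ps (ps w)))) (lnth (ps (ps (ps (pf w)))) j)) \<and>
     (\<forall>j<length (list_decode (ps (ps (ps (ps w))))). H t a (prod_encode (lnth (ps (ps (ps (ps w)))) j, nd (ps w)))) \<and>
     closedC a (nd (ps w)) (stg (ps w)) (ps (ps (ps (ps w)))) \<and> avoidC u (nd (ps w)) (stg (ps w)) (ps (ps (ps (ps w)))))
   \<or> (pf (pf w) = 1 \<and> pf (ps w) = 1 \<and> H t a (prod_encode (nd (pf w), nd (ps w))) \<and> H t u (sx (pf w)) \<and>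
       H t a (prod_encode (sx (pf w), nd (pf w))) \<and> H t u (sx (ps w)) \<and> H t a (prod_encode (sx (ps w), nd (ps w))))"

lemma compP_Dp: "compP (Suc (Suc (Suc (Suc 0)))) (\<lambda>ys. Dp (ys ! 2) (ys ! 3) (ys ! 0) (ys ! 1))"
  unfolding Dp_def closedC_def avoidC_def by (intro ci; simp)

lemma ce_rel_W: "ce_rel a x y \<longleftrightarrow> (\<exists>t. H t a (prod_encode (x, y)))"
  unfolding ce_rel_def using W_H by blast

lemma ex_all_mono:
  assumes "\<forall>j<(n::nat). \<exists>t. H t e (F j)"
  shows "\<exists>t. \<forall>j<n. H t e (F j)"
proof -
  have "finite {..<n}" by simp
  from finite_mono_ex[OF this, of "\<lambda>j t. H t e (F j)"] assms H_mono show ?thesis by blast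
qed

context
  fixes a u :: nat
  assumes tra: "trans_rel (ce_rel a)"
begin

interpretation S: setting "ce_rel a" "W u" "Ea a" "Uu u"
  by (rule setting_inst[OF tra])

lemma closedC_iff: "closedC a m s k \<longleftrightarrow> S.closedE m s (set (list_decode k))"
  unfolding closedC_def S.closedE_def memC_iff Ea_def
proof (intro iffI allI impI)
  fix x y
  assume c: "\<forall>p<Suc s. H s a p \<and> (ps p \<in> set (list_decode k) \<or> ps p = m) \<longrightarrow> pf p \<in> set (list_decode k)"
    and h: "(prod_encode (x, y) \<le> s \<and> H s a (prod_encode (x, y))) \<and> (y \<in> set (list_decode k) \<or> y = m)"
  then show "x \<in> set (list_decode k)" using c[rule_format, of "prod_encode (x, y)"] by simp
next
  fix p
  assume c: "\<forall>x y. (prod_encode (x, y) \<le> s \<and> H s a (prod_encode (x, y))) \<and> (y \<in> set (list_decode k) \<or> y = m) \<longrightarrow>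
      x \<in> set (list_decode k)"
    and p: "p < Suc s" "H s a p \<and> (ps p \<in> set (list_decode k) \<or> ps p = m)"
  then show "pf p \<in> set (list_decode k)" using c[rule_format, of "pf p" "ps p"] by simp
qed

lemma avoidC_iff: "avoidC u m s k \<longleftrightarrow> S.avoidU m s (set (list_decode k))"
  unfolding avoidC_def S.avoidU_def Uu_def
  by (simp add: all_set_conv_all_nth lnth_eq)

lemma Dp_iff: "(\<exists>t. Dp a u t w) \<longleftrightarrow> S.Rel (pf w) (ps w)"
proof -
  let ?z1 = "pf w" and ?z2 = "ps w"
  let ?k1 = "ps (ps (ps ?z1))" and ?k2 = "ps (ps (ps ?z2))"
  have sub: "(\<forall>j<length (list_decode ?k1). lnth ?k1 j \<in> set (list_decode ?k2)) \<longleftrightarrow> Kset ?z1 \<subseteq> Kset ?z2"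
    by (simp add: memC_iff subset_code(1) all_set_conv_all_nth lnth_eq)
  have allR: "(\<exists>t. \<forall>j<length (list_decode ?k2). H t a (prod_encode (lnth ?k2 j, nd ?z2))) \<longleftrightarrow>
      (\<forall>y\<in>Kset ?z2. ce_rel a y (nd ?z2))"
  proof
    assume "\<exists>t. \<forall>j<length (list_decode ?k2). H t a (prod_encode (lnth ?k2 j, nd ?z2))"
    then obtain t where "\<forall>j<length (list_decode ?k2). H t a (prod_encode (lnth ?k2 j, nd ?z2))" by blast
    then show "\<forall>y\<in>Kset ?z2. ce_rel a y (nd ?z2)" unfolding ce_rel_W all_set_conv_all_nth
      by (auto simp: lnth_eq)
  next
    assume "\<forall>y\<in>Kset ?z2. ce_rel a y (nd ?z2)"
    then have "\<forall>j<length (list_decode ?k2). \<exists>t. H t a (prod_encode (lnth ?k2 j, nd ?z2))"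
      unfolding ce_rel_W by (auto simp: lnth_eq)
    then show "\<exists>t. \<forall>j<length (list_decode ?k2). H t a (prod_encode (lnth ?k2 j, nd ?z2))" by (rule ex_all_mono)
  qed
  have five: "(\<exists>t. H t a p1 \<and> H t u p2 \<and> H t a p3 \<and> H t u p4 \<and> H t a p5) \<longleftrightarrow>
     (\<exists>t. H t a p1) \<and> (\<exists>t. H t u p2) \<and> (\<exists>t. H t a p3) \<and> (\<exists>t. H t u p4) \<and> (\<exists>t. H t a p5)" for p1 p2 p3 p4 p5
  proof
    assume "(\<exists>t. H t a p1) \<and> (\<exists>t. H t u p2) \<and> (\<exists>t. H t a p3) \<and> (\<exists>t. H t u p4) \<and> (\<exists>t. H t a p5)"
    then obtain t1 t2 t3 t4 t5 where "H t1 a p1" "H t2 u p2" "H t3 a p3" "H t4 u p4" "H t5 a p5" by blast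
    then have "H (t1+t2+t3+t4+t5) a p1 \<and> H (t1+t2+t3+t4+t5) u p2 \<and> H (t1+t2+t3+t4+t5) a p3 \<and>
       H (t1+t2+t3+t4+t5) u p4 \<and> H (t1+t2+t3+t4+t5) a p5"
      using H_mono by (meson le_add1 le_add2 order_trans add_le_mono)
    then show "\<exists>t. H t a p1 \<and> H t u p2 \<and> H t a p3 \<and> H t u p4 \<and> H t a p5" by blast
  qed blast
  have "(\<exists>t. Dp a u t w) \<longleftrightarrow>
    (pf ?z1 = 0 \<and> pf ?z2 = 0 \<and> stg ?z1 < stg ?z2 \<and> memC ?k2 (nd ?z1) \<and>
     (\<forall>j<length (list_decode ?k1). memC ?k2 (lnth ?k1 j)) \<and>
     (\<exists>t. \<forall>j<length (list_decode ?k2). H t a (prod_encode (lnth ?k2 j, nd ?z2))) \<and>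
     closedC a (nd ?z2) (stg ?z2) ?k2 \<and> avoidC u (nd ?z2) (stg ?z2) ?k2)
   \<or> (pf ?z1 = 1 \<and> pf ?z2 = 1 \<and> (\<exists>t. H t a (prod_encode (nd ?z1, nd ?z2)) \<and> H t u (sx ?z1) \<and>
       H t a (prod_encode (sx ?z1, nd ?z1)) \<and> H t u (sx ?z2) \<and> H t a (prod_encode (sx ?z2, nd ?z2))))"
    unfolding Dp_def by blast
  also have "\<dots> \<longleftrightarrow> S.Rel ?z1 ?z2"
    unfolding memC_iff
    unfolding S.Rel_def S.valid0_def closedC_iff avoidC_iff sub allR five
    unfolding ce_rel_W W_H by blast
  finally show ?thesis .
qed

end


definition chi :: recf where
  "chi = (SOME f. \<forall>ys. length ys = Suc (Suc (Suc (Suc 0))) \<longrightarrow> eval f ys (1 - ind (Dp (ys ! 2) (ys ! 3) (ys ! 0) (ys ! 1))))"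

lemma chi_eval: "length ys = Suc (Suc (Suc (Suc 0))) \<Longrightarrow> eval chi ys (1 - ind (Dp (ys ! 2) (ys ! 3) (ys ! 0) (ys ! 1)))"
proof -
  have "cmp (Suc (Suc (Suc (Suc 0)))) (\<lambda>ys. 1 - ind (Dp (ys ! 2) (ys ! 3) (ys ! 0) (ys ! 1)))"
    using compP_Dp unfolding compP_def by (intro ci)
  then have "\<exists>f. \<forall>ys. length ys = Suc (Suc (Suc (Suc 0))) \<longrightarrow> eval f ys (1 - ind (Dp (ys ! 2) (ys ! 3) (ys ! 0) (ys ! 1)))"
    unfolding cmp_def .
  from someI_ex[OF this] show "length ys = Suc (Suc (Suc (Suc 0))) \<Longrightarrow> ?thesis" unfolding chi_def by blast
qed

definition prog :: "nat \<Rightarrow> nat \<Rightarrow> recf" where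
  "prog a u = Mn (Cn chi [Proj 0, Proj 1, kprog a, kprog u])"

lemma prog_W: "W (code (prog a u)) = {w. \<exists>t. Dp a u t w}"
proof -
  let ?f = "Cn chi [Proj 0, Proj 1, kprog a, kprog u]"
  let ?G = "\<lambda>ys. 1 - ind (Dp a u (ys ! 0) (ys ! 1))"
  have f: "\<forall>ys. length ys = Suc (Suc 0) \<longrightarrow> eval ?f ys (?G ys)"
  proof (intro allI impI)
    fix ys :: "nat list" assume l: "length ys = Suc (Suc 0)"
    then obtain t w where ys: "ys = [t, w]" by (auto simp: length_Suc_conv)
    have "eval (Proj 0) [t, w] t" "eval (Proj 1) [t, w] w" using eval_Proj[of 0 "[t, w]"] eval_Proj[of 1 "[t, w]"] by simp_all
    then have "list_all2 (\<lambda>g y. eval g ys y) [Proj 0, Proj 1, kprog a, kprog u] [t, w, a, u]"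
      using ys by (simp add: eval_kprog)
    moreover have "eval chi [t, w, a, u] (1 - ind (Dp a u t w))" using chi_eval[of "[t, w, a, u]"] by simp
    ultimately have "eval ?f ys (1 - ind (Dp a u t w))" by (rule eval_Cn)
    then show "eval ?f ys (?G ys)" using ys by simp
  qed
  have "(\<exists>y. eval (prog a u) [w] y) \<longleftrightarrow> (\<exists>t. Dp a u t w)" for w
    using mn_dom[OF f, of "[w]"] unfolding prog_def by (simp add: ind_def)
  then show ?thesis unfolding W_code by blast
qed

definition hh :: "nat \<Rightarrow> nat" where "hh n = code (prog (pf n) (ps n))"

lemma hh_tc: "total_computable hh"
proof -
  have e: "(\<lambda>ys. hh (ys ! 0)) = (\<lambda>ys. prod_encode (5, prod_encode (3, prod_encode (code chi,
      Suc (prod_encode (prod_encode (2, 0), Suc (prod_encode (prod_encode (2, 1),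
      Suc (prod_encode (code (kprog (pf (ys ! 0))), Suc (prod_encode (code (kprog (ps (ys ! 0))), 0))))))))))))"
    by (rule ext) (simp add: hh_def prog_def)
  have "cmp (Suc 0) (\<lambda>ys. hh (ys ! 0))" unfolding e by (intro ci; simp)
  then show ?thesis unfolding cmp_def total_computable_def
    by (metis One_nat_def length_Cons list.size(3) nth_Cons_0)
qed

context
  fixes a u :: nat
  assumes tra: "trans_rel (ce_rel a)"
begin

interpretation S: setting "ce_rel a" "W u" "Ea a" "Uu u"
  by (rule setting_inst[OF tra])

lemma ce_Vf: "ce S.Vf"
proof -
  have "S.Vf = {w. \<exists>t. H t a (prod_encode (pf w div 2, nd (ps w))) \<and> (odd (pf w) \<longrightarrow> pf (ps w) = 0)}"
    unfolding S.Vf_def ce_rel_W by blast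
  moreover have "ce {w. \<exists>t. H t a (prod_encode (pf w div 2, nd (ps w))) \<and> (odd (pf w) \<longrightarrow> pf (ps w) = 0)}"
    by (rule ce_ex) (intro ci; simp)
  ultimately show ?thesis by simp
qed

lemma ce_Vg: "ce S.Vg"
proof -
  let ?Q = "\<lambda>t w. (pf (pf w) = 0 \<and> odd (ps w) \<and> H t a (prod_encode (nd (pf w), ps w div 2)) \<and>
      (\<forall>j<length (list_decode (ps (ps (ps (pf w))))). H t a (prod_encode (lnth (ps (ps (ps (pf w)))) j, ps w div 2)))) \<or>
    (pf (pf w) = 1 \<and> ps w = 2 * nd (pf w) \<and> H t u (sx (pf w)) \<and> H t a (prod_encode (sx (pf w), nd (pf w))))"
  have "S.Vg = {w. \<exists>t. ?Q t w}"
  proof (intro set_eqI iffI)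
    fix w assume "w \<in> S.Vg"
    then consider
      "pf (pf w) = 0" "odd (ps w)" "ce_rel a (nd (pf w)) (ps w div 2)" "\<forall>y\<in>Kset (pf w). ce_rel a y (ps w div 2)" |
      "pf (pf w) = 1" "ps w = 2 * nd (pf w)" "sx (pf w) \<in> W u" "ce_rel a (sx (pf w)) (nd (pf w))"
      unfolding S.Vg_def mem_Collect_eq by argo
    then show "w \<in> {w. \<exists>t. ?Q t w}"
    proof cases
      case 1
      let ?K = "ps (ps (ps (pf w)))"
      have "\<forall>j<Suc (length (list_decode ?K)). \<exists>t. H t a (if j = 0 then prod_encode (nd (pf w), ps w div 2)
          else prod_encode (lnth ?K (j - 1), ps w div 2))"
        using 1 unfolding ce_rel_W by (auto simp: lnth_eq)
      from ex_all_mono[OF this] obtain t where t: "\<forall>j<Suc (length (list_decode ?K)). H t a (if j = 0 then prod_encode (nd (pf w), ps w div 2)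
          else prod_encode (lnth ?K (j - 1), ps w div 2))" by blast
      have "H t a (prod_encode (nd (pf w), ps w div 2))" using t by auto
      moreover have "\<forall>j<length (list_decode ?K). H t a (prod_encode (lnth ?K j, ps w div 2))"
      proof (intro allI impI)
        fix j assume "j < length (list_decode ?K)"
        then show "H t a (prod_encode (lnth ?K j, ps w div 2))" using t[rule_format, of "Suc j"] by simp
      qed
      ultimately show ?thesis using 1 by blast
    next
      case 2
      obtain t1 t2 where "H t1 u (sx (pf w))" "H t2 a (prod_encode (sx (pf w), nd (pf w)))"
        using 2 unfolding ce_rel_W W_H by blast
      then have "H (t1 + t2) u (sx (pf w))" "H (t1 + t2) a (prod_encode (sx (pf w), nd (pf w)))"
        using H_mono by (meson le_add1 le_add2)+
      then show ?thesis using 2 by blast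
    qed
  next
    fix w assume "w \<in> {w. \<exists>t. ?Q t w}"
    then obtain t where "?Q t w" by blast
    then show "w \<in> S.Vg" unfolding S.Vg_def ce_rel_W W_H all_set_conv_all_nth
      by (auto simp: lnth_eq)
  qed
  moreover have "ce {w. \<exists>t. ?Q t w}" by (rule ce_ex) (intro ci; simp)
  ultimately show ?thesis by simp
qed

lemma Rel_b: "ce_rel (hh (prod_encode (a, u))) = S.Rel"
proof (intro ext)
  fix z1 z2
  have "ce_rel (hh (prod_encode (a, u))) z1 z2 \<longleftrightarrow> (\<exists>t. Dp a u t (prod_encode (z1, z2)))"
    unfolding ce_rel_def hh_def prog_W by simp
  also have "\<dots> \<longleftrightarrow> S.Rel z1 z2" using Dp_iff[OF tra, of u "prod_encode (z1, z2)"] by simp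
  finally show "ce_rel (hh (prod_encode (a, u))) z1 z2 = S.Rel z1 z2" .
qed

lemma final_au:
  "let b = hh (prod_encode (a, u)) in
     trans_rel (ce_rel b) \<and>
     computably_homeomorphic (Ideals (ce_rel b)) (ideal_base (ce_rel b))
       (Ideals (ce_rel a)) (added_base (ce_rel a) (avoid_set (ce_rel a) (W u)))"
  unfolding Let_def Rel_b
  using S.trans_Rel S.homeo[OF ce_Vf ce_Vg] unfolding S.A_def by blast

end

theorem theorem4:
  shows "\<exists>h. total_computable h \<and>
    (\<forall>a u. trans_rel (ce_rel a) \<longrightarrow>
       (let b = h (prod_encode (a, u)) in
          trans_rel (ce_rel b) \<and>
          computably_homeomorphic
            (Ideals (ce_rel b)) (ideal_base (ce_rel b))
            (Ideals (ce_rel a)) (added_base (ce_rel a) (avoid_set (ce_rel a) (W u)))))"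
  using hh_tc final_au by blast


end
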